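(* Let $G=(S,C,H)$ be a thick spider graph with weight $r\ge3$ and $T_H$ an MDNS of $G[H]$. Then: (1) $\tilde\gamma_{gr}^{\times 2}((S_f,C,H))=\tilde\gamma_{gr}^{\times 2}((S_t,C,H))=\tilde\gamma_{gr}^{\times 2}(G)+1=r+3+\tilde\gamma_{gr}^{\times 2}(G[H])$ and $T_H\oplus(s_1,\dots,s_r,s'_r,c_1,c_2)$ is an MDNS of both $(S_f,C,H)$ and $(S_t,C,H)$; (2) $\tilde\gamma_{gr}^{\times 2}((S,C_f,H))=\tilde\gamma_{gr}^{\times 2}((S,C_t,H))=\tilde\gamma_{gr}^{\times 2}(G)=r+2+\tilde\gamma_{gr}^{\times 2}(G[H])$ and $T_H\oplus(s_1,\dots,s_r,c_1,c_2)$ is an MDNS of both $(S,C_f,H)$ and $(S,C_t,H)$.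
   Context: Graphs are finite, simple, undirected; $N(v)$ open, $N[v]$ closed neighborhood. A sequence of distinct vertices $(v_1,\dots,v_k)$ is a double neighborhood sequence (DNS) if for each $i$ some $u\in N[v_i]$ satisfies $|\{j<i:u\in N[v_j]\}|\le 1$; an MDNS is a DNS of maximum length and $\tilde\gamma_{gr}^{\times 2}$ is that length; for the empty graph it is $0$ with the empty sequence. $\oplus$ is concatenation. A spider graph $G=(S,C,H)$: $V(G)$ is partitioned into $S=\{s_1,\dots,s_r\}$ (stable), $C=\{c_1,\dots,c_r\}$ (clique), $H$ (possibly empty), all edges between $C$ and $H$, none between $H$ and $S$; thick means $s_ic_j\in E$ iff $i\neq j$. Quasi-spider graphs: $(S_f,C,H)$ (resp. $(S_t,C,H)$) is obtained by adding a new vertex $s'_r$ with $N(s'_r)=N(s_r)$ (resp. $N[s'_r]=N[s_r]\cup\{s'_r\}$, adjacent to $s_r$); $(S,C_f,H)$ and $(S,C_t,H)$ are obtained analogously by adding a false (resp. true) twin $c'_r$ of $c_r$. *)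

theory Defs
  imports Main
begin

definition simple_graph :: "'a set \<Rightarrow> ('a \<Rightarrow> 'a \<Rightarrow> bool) \<Rightarrow> bool" where
  "simple_graph V E \<longleftrightarrow> finite V \<and> (\<forall>x y. E x y \<longrightarrow> x \<in> V \<and> y \<in> V)
     \<and> (\<forall>x y. E x y \<longrightarrow> E y x) \<and> (\<forall>x. \<not> E x x)"

definition cnbr :: "'a set \<Rightarrow> ('a \<Rightarrow> 'a \<Rightarrow> bool) \<Rightarrow> 'a \<Rightarrow> 'a set" where
  "cnbr V E v = {u \<in> V. u = v \<or> E v u}"

definition is_dns :: "'a set \<Rightarrow> ('a \<Rightarrow> 'a \<Rightarrow> bool) \<Rightarrow> 'a list \<Rightarrow> bool" where
  "is_dns V E xs \<longleftrightarrow> distinct xs \<and> set xs \<subseteq> V \<and>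
     (\<forall>i < length xs. \<exists>u \<in> cnbr V E (xs ! i).
        card {j. j < i \<and> u \<in> cnbr V E (xs ! j)} \<le> 1)"

definition gamma_dns :: "'a set \<Rightarrow> ('a \<Rightarrow> 'a \<Rightarrow> bool) \<Rightarrow> nat" where
  "gamma_dns V E = Max {length xs | xs. is_dns V E xs}"

definition is_mdns :: "'a set \<Rightarrow> ('a \<Rightarrow> 'a \<Rightarrow> bool) \<Rightarrow> 'a list \<Rightarrow> bool" where
  "is_mdns V E xs \<longleftrightarrow> is_dns V E xs \<and> length xs = gamma_dns V E"

definition induced :: "('a \<Rightarrow> 'a \<Rightarrow> bool) \<Rightarrow> 'a set \<Rightarrow> 'a \<Rightarrow> 'a \<Rightarrow> bool" where
  "induced E H x y \<longleftrightarrow> E x y \<and> x \<in> H \<and> y \<in> H"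

definition false_twin_edges :: "('a \<Rightarrow> 'a \<Rightarrow> bool) \<Rightarrow> 'a \<Rightarrow> 'a \<Rightarrow> 'a \<Rightarrow> 'a \<Rightarrow> bool" where
  "false_twin_edges E v w x y \<longleftrightarrow> E x y \<or> (x = w \<and> E v y) \<or> (y = w \<and> E x v)"

definition true_twin_edges :: "('a \<Rightarrow> 'a \<Rightarrow> bool) \<Rightarrow> 'a \<Rightarrow> 'a \<Rightarrow> 'a \<Rightarrow> 'a \<Rightarrow> bool" where
  "true_twin_edges E v w x y \<longleftrightarrow> false_twin_edges E v w x y \<or> (x = w \<and> y = v) \<or> (x = v \<and> y = w)"

definition thick_spider ::
  "'a set \<Rightarrow> ('a \<Rightarrow> 'a \<Rightarrow> bool) \<Rightarrow> nat \<Rightarrow> (nat \<Rightarrow> 'a) \<Rightarrow> (nat \<Rightarrow> 'a) \<Rightarrow> 'a set \<Rightarrow> bool" where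
  "thick_spider V E r s c H \<longleftrightarrow> simple_graph V E
     \<and> inj_on s {1..r} \<and> inj_on c {1..r}
     \<and> s ` {1..r} \<inter> c ` {1..r} = {} \<and> s ` {1..r} \<inter> H = {} \<and> c ` {1..r} \<inter> H = {}
     \<and> V = s ` {1..r} \<union> c ` {1..r} \<union> H
     \<and> (\<forall>i\<in>{1..r}. \<forall>j\<in>{1..r}. \<not> E (s i) (s j))
     \<and> (\<forall>i\<in>{1..r}. \<forall>j\<in>{1..r}. i \<noteq> j \<longrightarrow> E (c i) (c j))
     \<and> (\<forall>i\<in>{1..r}. \<forall>h\<in>H. E (c i) h)
     \<and> (\<forall>i\<in>{1..r}. \<forall>h\<in>H. \<not> E (s i) h)
     \<and> (\<forall>i\<in>{1..r}. \<forall>j\<in>{1..r}. E (s i) (c j) \<longleftrightarrow> i \<noteq> j)"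

end

theory Submission
  imports Defs
begin
lemma cnbr_iff: "u \<in> cnbr V E v \<longleftrightarrow> u \<in> V \<and> (u = v \<or> E v u)"
  by (simp add: cnbr_def)

lemma cnbr_sym:
  assumes "simple_graph V E" "v \<in> V"
  shows "u \<in> cnbr V E v \<longleftrightarrow> v \<in> cnbr V E u"
  using assms by (auto simp: cnbr_def simple_graph_def)

lemma cnbr_self: "v \<in> V \<Longrightarrow> v \<in> cnbr V E v"
  by (simp add: cnbr_def)

lemma cnbr_subset: "cnbr V E v \<subseteq> V"
  by (auto simp: cnbr_def)

lemma card_cover_eq:
  assumes sg: "simple_graph V E" and dist: "distinct xs" and sub: "set xs \<subseteq> V"
    and i: "i \<le> length xs" and u: "u \<in> V"
  shows "card {j. j < i \<and> u \<in> cnbr V E (xs ! j)} = card (set (take i xs) \<inter> cnbr V E u)"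
proof -
  have inj: "inj_on (nth xs) {j. j < i \<and> u \<in> cnbr V E (xs ! j)}"
    using dist i by (auto simp: inj_on_def nth_eq_iff_index_eq)
  have "nth xs ` {j. j < i \<and> u \<in> cnbr V E (xs ! j)} = set (take i xs) \<inter> cnbr V E u"
  proof
    show "nth xs ` {j. j < i \<and> u \<in> cnbr V E (xs ! j)} \<subseteq> set (take i xs) \<inter> cnbr V E u"
    proof
      fix y assume "y \<in> nth xs ` {j. j < i \<and> u \<in> cnbr V E (xs ! j)}"
      then obtain j where j: "j < i" "u \<in> cnbr V E (xs ! j)" "y = xs ! j" by auto
      have "xs ! j \<in> V" using sub j i by (meson in_mono less_le_trans nth_mem)
      hence "y \<in> cnbr V E u" using j cnbr_sym[OF sg] by blast
      moreover have "y \<in> set (take i xs)" using j i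
        by (auto simp: in_set_conv_nth intro!: exI[of _ j])
      ultimately show "y \<in> set (take i xs) \<inter> cnbr V E u" by blast
    qed
  next
    show "set (take i xs) \<inter> cnbr V E u \<subseteq> nth xs ` {j. j < i \<and> u \<in> cnbr V E (xs ! j)}"
    proof
      fix y assume y: "y \<in> set (take i xs) \<inter> cnbr V E u"
      then obtain j where j: "j < i" "y = xs ! j" using i
        by (auto simp: in_set_conv_nth)
      have "u \<in> cnbr V E y" using y cnbr_sym[OF sg u] by blast
      thus "y \<in> nth xs ` {j. j < i \<and> u \<in> cnbr V E (xs ! j)}" using j by auto
    qed
  qed
  thus ?thesis using card_image[OF inj] by simp
qed

lemma dns_iff:
  assumes sg: "simple_graph V E"
  shows "is_dns V E xs \<longleftrightarrow> distinct xs \<and> set xs \<subseteq> V \<and>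
     (\<forall>i < length xs. \<exists>u \<in> cnbr V E (xs ! i). card (set (take i xs) \<inter> cnbr V E u) \<le> 1)"
proof -
  have "card {j. j < i \<and> u \<in> cnbr V E (xs ! j)} = card (set (take i xs) \<inter> cnbr V E u)"
    if "distinct xs" "set xs \<subseteq> V" "i < length xs" "u \<in> cnbr V E (xs ! i)" for i u
    using card_cover_eq[OF sg that(1,2), of i u] that cnbr_subset by fastforce
  thus ?thesis unfolding is_dns_def by (auto cong: conj_cong)
qed

lemma dns_snoc:
  assumes sg: "simple_graph V E"
  shows "is_dns V E (xs @ [x]) \<longleftrightarrow> is_dns V E xs \<and> x \<notin> set xs \<and> x \<in> V \<and>
     (\<exists>u \<in> cnbr V E x. card (set xs \<inter> cnbr V E u) \<le> 1)"
proof -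
  have A: "(\<forall>i < length (xs @ [x]). \<exists>u \<in> cnbr V E ((xs @ [x]) ! i). card (set (take i (xs @ [x])) \<inter> cnbr V E u) \<le> 1)
    \<longleftrightarrow> (\<forall>i < length xs. \<exists>u \<in> cnbr V E (xs ! i). card (set (take i xs) \<inter> cnbr V E u) \<le> 1)
       \<and> (\<exists>u \<in> cnbr V E x. card (set xs \<inter> cnbr V E u) \<le> 1)"
    by (auto simp: nth_append less_Suc_eq)
  show ?thesis unfolding dns_iff[OF sg] A by auto
qed

lemma dns_Nil: "is_dns V E []"
  by (simp add: is_dns_def)

lemma dns_length_le:
  assumes sg: "simple_graph V E" and d: "is_dns V E xs"
  shows "length xs \<le> card V"
proof -
  have "distinct xs" "set xs \<subseteq> V" using d by (auto simp: is_dns_def)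
  moreover have "finite V" using sg by (simp add: simple_graph_def)
  ultimately show ?thesis by (metis card_mono distinct_card)
qed

lemma dns_le_gamma:
  assumes sg: "simple_graph V E" and d: "is_dns V E xs"
  shows "length xs \<le> gamma_dns V E"
proof -
  have fin: "finite {length xs | xs. is_dns V E xs}"
    by (rule finite_subset[of _ "{..card V}"]) (auto dest: dns_length_le[OF sg])
  show ?thesis unfolding gamma_dns_def using d by (auto intro!: Max_ge[OF fin])
qed

lemma gamma_le:
  assumes sg: "simple_graph V E" and b: "\<And>xs. is_dns V E xs \<Longrightarrow> length xs \<le> B"
  shows "gamma_dns V E \<le> B"
proof -
  have fin: "finite {length xs | xs. is_dns V E xs}"
    by (rule finite_subset[of _ "{..card V}"]) (auto dest: dns_length_le[OF sg])
  have ne: "{length xs | xs. is_dns V E xs} \<noteq> {}" using dns_Nil by blast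
  show ?thesis unfolding gamma_dns_def using b by (auto simp: Max_le_iff[OF fin ne])
qed

lemma induced_sg:
  assumes "simple_graph V E" "H \<subseteq> V"
  shows "simple_graph H (induced E H)"
  using assms by (auto simp: simple_graph_def induced_def intro: finite_subset)

lemma cnbr_induced:
  assumes "H \<subseteq> V" "v \<in> H"
  shows "cnbr H (induced E H) v = cnbr V E v \<inter> H"
  using assms by (auto simp: cnbr_def induced_def)

lemma filter_H_dns:
  assumes sg: "simple_graph V E" and HV: "H \<subseteq> V" and d: "is_dns V E D"
    and Hp: "\<forall>h\<in>H. \<forall>u\<in>cnbr V E h. u \<notin> H \<longrightarrow> (\<forall>h'\<in>H. E u h')"
  shows "is_dns H (induced E H) (filter (\<lambda>x. x \<in> H) D)"
  using d
proof (induction D rule: rev_induct)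
  case Nil
  then show ?case by (simp add: dns_Nil)
next
  case (snoc x xs)
  have sgH: "simple_graph H (induced E H)" using induced_sg[OF sg HV] .
  from snoc.prems have dx: "is_dns V E xs" "x \<notin> set xs" "x \<in> V"
    and wit: "\<exists>u \<in> cnbr V E x. card (set xs \<inter> cnbr V E u) \<le> 1"
    using dns_snoc[OF sg] by auto
  have IH: "is_dns H (induced E H) (filter (\<lambda>x. x \<in> H) xs)" using snoc.IH dx by blast
  show ?case
  proof (cases "x \<in> H")
    case False
    then show ?thesis using IH by simp
  next
    case True
    from wit obtain u where u: "u \<in> cnbr V E x" "card (set xs \<inter> cnbr V E u) \<le> 1" by blast
    have fin: "finite (set xs \<inter> cnbr V E u)" by simp
    have "\<exists>u' \<in> cnbr H (induced E H) x. card (set (filter (\<lambda>x. x \<in> H) xs) \<inter> cnbr H (induced E H) u') \<le> 1"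
    proof (cases "u \<in> H")
      case True
      have "set (filter (\<lambda>x. x \<in> H) xs) \<inter> cnbr H (induced E H) u \<subseteq> set xs \<inter> cnbr V E u"
        using cnbr_induced[OF HV True] by auto
      hence "card (set (filter (\<lambda>x. x \<in> H) xs) \<inter> cnbr H (induced E H) u) \<le> 1"
        using u(2) card_mono[OF fin] le_trans by blast
      moreover have "u \<in> cnbr H (induced E H) x" using cnbr_induced[OF HV \<open>x \<in> H\<close>] u True by auto
      ultimately show ?thesis by blast
    next
      case False
      have all: "\<forall>h'\<in>H. E u h'" using Hp \<open>x \<in> H\<close> u(1) False by blast
      have "set (filter (\<lambda>x. x \<in> H) xs) \<inter> cnbr H (induced E H) x \<subseteq> set xs \<inter> cnbr V E u"
        using all HV by (auto simp: cnbr_def)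
      hence "card (set (filter (\<lambda>x. x \<in> H) xs) \<inter> cnbr H (induced E H) x) \<le> 1"
        using u(2) card_mono[OF fin] le_trans by blast
      moreover have "x \<in> cnbr H (induced E H) x" using \<open>x \<in> H\<close> by (rule cnbr_self)
      ultimately show ?thesis by blast
    qed
    then show ?thesis using IH True dx dns_snoc[OF sgH] by simp
  qed
qed

lemma filter_H_le:
  assumes sg: "simple_graph V E" and HV: "H \<subseteq> V" and d: "is_dns V E D"
    and Hp: "\<forall>h\<in>H. \<forall>u\<in>cnbr V E h. u \<notin> H \<longrightarrow> (\<forall>h'\<in>H. E u h')"
  shows "length (filter (\<lambda>x. x \<in> H) D) \<le> gamma_dns H (induced E H)"
  using dns_le_gamma[OF induced_sg[OF sg HV] filter_H_dns[OF assms]] .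

lemma filter_H_slack:
  assumes sg: "simple_graph V E" and HV: "H \<subseteq> V" and d: "is_dns V E D"
    and Hp: "\<forall>h\<in>H. \<forall>u\<in>cnbr V E h. u \<notin> H \<longrightarrow> (\<forall>h'\<in>H. E u h')"
    and h0: "h0 \<in> H" and unc: "\<forall>y\<in>set D \<inter> H. y \<notin> cnbr V E h0"
  shows "length (filter (\<lambda>x. x \<in> H) D) + 1 \<le> gamma_dns H (induced E H)"
proof -
  have sgH: "simple_graph H (induced E H)" using induced_sg[OF sg HV] .
  have h0n: "h0 \<notin> set D" using unc h0 HV cnbr_self[of h0 V E] by blast
  have "set (filter (\<lambda>x. x \<in> H) D) \<inter> cnbr H (induced E H) h0 = {}"
    using unc cnbr_induced[OF HV h0] by auto
  hence "is_dns H (induced E H) (filter (\<lambda>x. x \<in> H) D @ [h0])"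
    unfolding dns_snoc[OF sgH] using filter_H_dns[OF sg HV d Hp] h0 h0n cnbr_self[OF h0, of "induced E H"]
    by (intro conjI bexI[of _ h0]) auto
  from dns_le_gamma[OF sgH this] show ?thesis by simp
qed

lemma exists_p:
  assumes "2 \<le> card (set D \<inter> C)"
  shows "\<exists>p. 1 \<le> p \<and> p \<le> length D \<and> card (set (take p D) \<inter> C) = 2 \<and> D ! (p - 1) \<in> C
          \<and> card (set (take (p - 1) D) \<inter> C) = 1 \<and> D ! (p - 1) \<notin> set (take (p - 1) D)"
  using assms
proof (induction D rule: rev_induct)
  case Nil
  then show ?case by simp
next
  case (snoc x xs)
  show ?case
  proof (cases "2 \<le> card (set xs \<inter> C)")
    case True
    then obtain p where p: "1 \<le> p" "p \<le> length xs" "card (set (take p xs) \<inter> C) = 2" "xs ! (p - 1) \<in> C"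
          "card (set (take (p - 1) xs) \<inter> C) = 1" "xs ! (p - 1) \<notin> set (take (p - 1) xs)"
      using snoc.IH by blast
    have "take p (xs @ [x]) = take p xs" "take (p - 1) (xs @ [x]) = take (p-1) xs"
      "(xs @ [x]) ! (p - 1) = xs ! (p - 1)" using p by (auto simp: nth_append)
    then show ?thesis using p by (intro exI[of _ p]) auto
  next
    case False
    have fin: "finite (set xs \<inter> C)" by simp
    have xC: "x \<in> C" "x \<notin> set xs"
    proof -
      show "x \<in> C" using snoc.prems False by (cases "x \<in> C") auto
      show "x \<notin> set xs" using snoc.prems False
        by (metis Un_insert_right append.right_neutral insert_absorb list.set(2) set_append)
    qed
    have eq: "set (xs @ [x]) \<inter> C = insert x (set xs \<inter> C)" using xC by auto
    have c1: "card (set xs \<inter> C) = 1" using snoc.prems False fin xC unfolding eq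
      by (simp add: card_insert_if)
    show ?thesis using xC c1 eq snoc.prems
      by (intro exI[of _ "Suc (length xs)"]) auto
  qed
qed

lemma dns_wit:
  assumes sg: "simple_graph V E" and d: "is_dns V E D" and i: "i < length D"
  shows "\<exists>u. u \<in> V \<and> D ! i \<in> cnbr V E u \<and> u \<in> cnbr V E (D ! i) \<and> card (set (take i D) \<inter> cnbr V E u) \<le> 1"
proof -
  have DV: "D ! i \<in> V" using d i by (auto simp: is_dns_def)
  obtain u where u: "u \<in> cnbr V E (D ! i)" "card (set (take i D) \<inter> cnbr V E u) \<le> 1"
    using d i dns_iff[OF sg] by blast
  have "D ! i \<in> cnbr V E u" using u cnbr_sym[OF sg DV] by blast
  moreover have "u \<in> V" using u(1) by (simp add: cnbr_iff)
  ultimately show ?thesis using u by blast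
qed

lemma group_slot:
  assumes sg: "simple_graph V E" and d: "is_dns V E D" and p: "p \<le> length D"
    and k: "\<forall>u\<in>U. k \<le> card (set (take p D) \<inter> cnbr V E u)"
    and g2: "\<forall>i. p \<le> i \<longrightarrow> i < length D \<longrightarrow> (\<exists>u\<in>U. D ! i \<in> cnbr V E u) \<longrightarrow> (\<forall>u\<in>U. D ! i \<in> cnbr V E u)"
  shows "card {i. p \<le> i \<and> i < length D \<and> (\<exists>u\<in>U. D ! i \<in> cnbr V E u \<and> card (set (take i D) \<inter> cnbr V E u) \<le> 1)} \<le> 2 - k"
    (is "card ?A \<le> _")
proof (cases "?A = {}")
  case True
  show ?thesis by (subst True) simp
next
  case False
  have dist: "distinct D" using d by (simp add: is_dns_def)
  have finA: "finite ?A" by (rule finite_subset[of _ "{..<length D}"]) auto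
  define m where "m = Max ?A"
  have mA: "m \<in> ?A" unfolding m_def using Max_in[OF finA False] .
  then obtain u where u: "u \<in> U" "D ! m \<in> cnbr V E u" "card (set (take m D) \<inter> cnbr V E u) \<le> 1" by blast
  have pm: "p \<le> m" "m < length D" using mA by auto
  have lt: "i < m" if "i \<in> ?A - {m}" for i
    using that Max_ge[OF finA] unfolding m_def[symmetric] by fastforce
  let ?B1 = "set (take p D) \<inter> cnbr V E u"
  let ?B2 = "nth D ` (?A - {m})"
  have sub: "?B1 \<union> ?B2 \<subseteq> set (take m D) \<inter> cnbr V E u"
  proof
    fix y assume "y \<in> ?B1 \<union> ?B2"
    then show "y \<in> set (take m D) \<inter> cnbr V E u"
    proof
      assume "y \<in> ?B1"
      thus ?thesis using set_take_subset_set_take[OF pm(1), of D] by blast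
    next
      assume "y \<in> ?B2"
      then obtain i where i: "i \<in> ?A - {m}" "y = D ! i" by blast
      have "i < m" using lt[OF i(1)] .
      hence "y \<in> set (take m D)" using i pm by (auto simp: in_set_conv_nth intro!: exI[of _ i])
      moreover have "y \<in> cnbr V E u" using i g2 u(1) by blast
      ultimately show ?thesis by blast
    qed
  qed
  have disj: "?B1 \<inter> ?B2 = {}"
  proof (rule ccontr)
    assume "?B1 \<inter> ?B2 \<noteq> {}"
    then obtain y where y1: "y \<in> set (take p D)" and y2: "y \<in> ?B2" by blast
    from y2 obtain i where i: "i \<in> ?A" "y = D ! i" by blast
    have il: "i < length D" "p \<le> i" using i(1) by auto
    from y1 obtain j where j: "j < p" "y = D ! j" using p by (auto simp: in_set_conv_nth)
    have "i = j" using i(2) j(2) il j(1) p dist nth_eq_iff_index_eq by fastforce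
    thus False using il j by simp
  qed
  have inj: "inj_on (nth D) (?A - {m})"
    using dist by (auto simp: inj_on_def nth_eq_iff_index_eq)
  have cB2: "card ?B2 = card ?A - 1" using card_image[OF inj] finA mA by simp
  have "card (?B1 \<union> ?B2) = card ?B1 + card ?B2" using disj by (simp add: card_Un_disjoint)
  moreover have "card (?B1 \<union> ?B2) \<le> 1"
    using card_mono[OF _ sub] u(3) by (meson finite_Int finite_set le_trans)
  moreover have "k \<le> card ?B1" using k u(1) by blast
  moreover have "card ?A \<ge> 1" using False finA by (simp add: Suc_le_eq card_gt_0_iff)
  ultimately show ?thesis using cB2 by linarith
qed

lemma key_count:
  assumes sg: "simple_graph V E" and d: "is_dns V E D" and p: "p \<le> length D"
    and finI: "finite I"
    and wit: "\<forall>i. p \<le> i \<longrightarrow> i < length D \<longrightarrow> D ! i \<notin> H \<longrightarrow>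
       (\<exists>j\<in>I. \<exists>u\<in>U j. D ! i \<in> cnbr V E u \<and> card (set (take i D) \<inter> cnbr V E u) \<le> 1)"
    and g2: "\<forall>j\<in>I. \<forall>i. p \<le> i \<longrightarrow> i < length D \<longrightarrow> (\<exists>u\<in>U j. D ! i \<in> cnbr V E u) \<longrightarrow> (\<forall>u\<in>U j. D ! i \<in> cnbr V E u)"
    and k: "\<forall>j\<in>I. \<forall>u\<in>U j. k j \<le> card (set (take p D) \<inter> cnbr V E u)"
  shows "length (filter (\<lambda>x. x \<notin> H) D) \<le> card (set (take p D) - H) + (\<Sum>j\<in>I. 2 - k j)"
proof -
  have dist: "distinct D" using d by (simp add: is_dns_def)
  let ?L = "{i. i < p \<and> D ! i \<notin> H}"
  let ?R = "{i. p \<le> i \<and> i < length D \<and> D ! i \<notin> H}"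
  have "length (filter (\<lambda>x. x \<notin> H) D) = card {i. i < length D \<and> D ! i \<notin> H}"
    by (rule length_filter_conv_card)
  also have "{i. i < length D \<and> D ! i \<notin> H} = ?L \<union> ?R" using p by auto
  also have "card (?L \<union> ?R) = card ?L + card ?R"
    by (rule card_Un_disjoint) auto
  finally have eq: "length (filter (\<lambda>x. x \<notin> H) D) = card ?L + card ?R" .
  have "{i. i < length (take p D) \<and> take p D ! i \<notin> H} = ?L" using p by auto
  hence "card ?L = length (filter (\<lambda>x. x \<notin> H) (take p D))"
    by (simp add: length_filter_conv_card)
  also have "\<dots> = card (set (filter (\<lambda>x. x \<notin> H) (take p D)))"
    using distinct_card[of "filter (\<lambda>x. x \<notin> H) (take p D)"] dist by simp
  also have "set (filter (\<lambda>x. x \<notin> H) (take p D)) = set (take p D) - H" by auto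
  finally have cL: "card ?L = card (set (take p D) - H)" .
  define A where "A j = {i. p \<le> i \<and> i < length D \<and> (\<exists>u\<in>U j. D ! i \<in> cnbr V E u \<and> card (set (take i D) \<inter> cnbr V E u) \<le> 1)}" for j
  have "?R \<subseteq> (\<Union>j\<in>I. A j)" using wit unfolding A_def by blast
  hence "card ?R \<le> card (\<Union>j\<in>I. A j)"
    by (rule card_mono[rotated]) (auto simp: A_def intro: finI)
  also have "\<dots> \<le> (\<Sum>j\<in>I. card (A j))" by (rule card_UN_le[OF finI])
  also have "\<dots> \<le> (\<Sum>j\<in>I. 2 - k j)"
  proof (rule sum_mono)
    fix j assume j: "j \<in> I"
    have k': "\<forall>u\<in>U j. k j \<le> card (set (take p D) \<inter> cnbr V E u)" using k j by blast
    have g2': "\<forall>i. p \<le> i \<longrightarrow> i < length D \<longrightarrow> (\<exists>u\<in>U j. D ! i \<in> cnbr V E u) \<longrightarrow> (\<forall>u\<in>U j. D ! i \<in> cnbr V E u)"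
      using g2 j by blast
    show "card (A j) \<le> 2 - k j" unfolding A_def
      by (rule group_slot[OF sg d p k' g2'])
  qed
  finally show ?thesis using eq cL by linarith
qed

lemma sg_sym: "simple_graph V E \<Longrightarrow> E x y \<Longrightarrow> E y x"
  by (simp add: simple_graph_def)

lemma sg_V: "simple_graph V E \<Longrightarrow> E x y \<Longrightarrow> x \<in> V \<and> y \<in> V"
  by (simp add: simple_graph_def)

lemma sg_irr: "simple_graph V E \<Longrightarrow> \<not> E x x"
  by (simp add: simple_graph_def)

lemma card_sum_ind:
  assumes "finite S"
  shows "card (P \<inter> S) = (\<Sum>x\<in>S. if x \<in> P then 1 else 0)"
proof -
  have "(\<Sum>x\<in>S. if x \<in> P then 1 else (0::nat)) = (\<Sum>x\<in>{x\<in>S. x \<in> P}. 1)"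
    using sum.inter_filter[OF assms, of "\<lambda>_. 1::nat" "\<lambda>x. x \<in> P"] by simp
  also have "\<dots> = card {x\<in>S. x \<in> P}" by simp
  also have "{x\<in>S. x \<in> P} = P \<inter> S" by auto
  finally show ?thesis by simp
qed

lemma setup_H:
  assumes sg: "simple_graph V E"
    and part: "V = Ss \<union> Cs \<union> H"
    and CH: "\<forall>c\<in>Cs. \<forall>h\<in>H. E c h"
    and SH: "\<forall>\<sigma>\<in>Ss. \<forall>h\<in>H. \<not> E \<sigma> h"
  shows "\<forall>h\<in>H. \<forall>u\<in>cnbr V E h. u \<notin> H \<longrightarrow> (\<forall>h'\<in>H. E u h')"
proof (intro ballI impI)
  fix h u h' assume h: "h \<in> H" and u: "u \<in> cnbr V E h" and uH: "u \<notin> H" and h': "h' \<in> H"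
  have "u \<in> V" "u = h \<or> E h u" using u by (auto simp: cnbr_iff)
  hence Ehu: "E h u" using uH h by auto
  have "u \<notin> Ss" using SH h sg_sym[OF sg Ehu] by blast
  hence "u \<in> Cs" using \<open>u \<in> V\<close> part uH by blast
  thus "E u h'" using CH h' by blast
qed

lemma len_split: "length D = length (filter (\<lambda>x. x \<in> H) D) + length (filter (\<lambda>x. x \<notin> H) D)"
  using sum_length_filter_compl[of "\<lambda>x. x \<in> H" D] by simp

lemma small_C:
  assumes d: "is_dns V E D" and part: "V = Ss \<union> Cs \<union> H" and fin: "finite V"
    and c: "card (set D \<inter> Cs) \<le> 1"
  shows "length (filter (\<lambda>x. x \<notin> H) D) \<le> card Ss + 1"
proof -
  have dist: "distinct D" and sub: "set D \<subseteq> V" using d by (auto simp: is_dns_def)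
  have "length (filter (\<lambda>x. x \<notin> H) D) = card (set (filter (\<lambda>x. x \<notin> H) D))"
    using distinct_card[of "filter (\<lambda>x. x \<notin> H) D"] dist by simp
  also have "set (filter (\<lambda>x. x \<notin> H) D) \<subseteq> (set D \<inter> Ss) \<union> (set D \<inter> Cs)"
    using sub part by auto
  hence "card (set (filter (\<lambda>x. x \<notin> H) D)) \<le> card ((set D \<inter> Ss) \<union> (set D \<inter> Cs))"
    by (intro card_mono) auto
  also have "\<dots> \<le> card (set D \<inter> Ss) + card (set D \<inter> Cs)" by (rule card_Un_le)
  also have "card (set D \<inter> Ss) \<le> card Ss"
    using fin part by (intro card_mono) auto
  finally show ?thesis using c by linarith
qed

lemma anchors:
  assumes d: "is_dns V E D" and c: "2 \<le> card (set D \<inter> Cs)"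
  obtains p q1 q2 where "1 \<le> p" "p \<le> length D" "set (take p D) \<inter> Cs = {q1, q2}" "q1 \<noteq> q2"
    "q2 = D ! (p - 1)" "set (take p D) = insert q2 (set (take (p - 1) D))"
    "set (take (p - 1) D) \<inter> Cs = {q1}" "q2 \<notin> set (take (p - 1) D)"
proof -
  obtain p where p: "1 \<le> p" "p \<le> length D" "card (set (take p D) \<inter> Cs) = 2" "D ! (p - 1) \<in> Cs"
    "card (set (take (p - 1) D) \<inter> Cs) = 1" "D ! (p - 1) \<notin> set (take (p - 1) D)"
    using exists_p[OF c] by blast
  have sp: "Suc (p - 1) = p" "p - 1 < length D" using p by auto
  have tk: "take p D = take (p - 1) D @ [D ! (p - 1)]"
    using take_Suc_conv_app_nth[OF sp(2)] sp(1) by simp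
  hence st: "set (take p D) = insert (D ! (p - 1)) (set (take (p - 1) D))" by simp
  obtain q1 where q1: "set (take (p - 1) D) \<inter> Cs = {q1}" using p(5) card_1_singletonE by blast
  have "set (take p D) \<inter> Cs = {q1, D ! (p - 1)}" using st q1 p(4) by auto
  moreover have "q1 \<noteq> D ! (p - 1)" using q1 p(6) by auto
  ultimately show ?thesis
    by (intro that[of p q1 "D ! (p - 1)"] p(1,2,6) st q1) auto
qed

lemma clique_bound:
  assumes sg: "simple_graph V E"
    and part: "V = Ss \<union> Cs \<union> H" "Ss \<inter> Cs = {}" "Ss \<inter> H = {}" "Cs \<inter> H = {}"
    and CH: "\<forall>c\<in>Cs. \<forall>h\<in>H. E c h"
    and SH: "\<forall>\<sigma>\<in>Ss. \<forall>h\<in>H. \<not> E \<sigma> h"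
    and Ccl: "\<forall>c1\<in>Cs. \<forall>c2\<in>Cs. c1 \<noteq> c2 \<longrightarrow> E c1 c2"
    and SC: "\<forall>\<sigma>\<in>Ss. \<forall>c1\<in>Cs. \<forall>c2\<in>Cs. c1 \<noteq> c2 \<longrightarrow> E \<sigma> c1 \<or> E \<sigma> c2"
    and d: "is_dns V E D"
  shows "length D \<le> gamma_dns H (induced E H) + card Ss + 2"
proof -
  have finV: "finite V" using sg by (simp add: simple_graph_def)
  have HV: "H \<subseteq> V" using part by blast
  have finS: "finite Ss" using finV part by (auto intro: finite_subset)
  have Hp: "\<forall>h\<in>H. \<forall>u\<in>cnbr V E h. u \<notin> H \<longrightarrow> (\<forall>h'\<in>H. E u h')"
    using setup_H[OF sg part(1) CH SH] .
  have nH: "length (filter (\<lambda>x. x \<in> H) D) \<le> gamma_dns H (induced E H)"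
    using filter_H_le[OF sg HV d Hp] .
  have nX: "length (filter (\<lambda>x. x \<notin> H) D) \<le> card Ss + 2"
  proof (cases "card (set D \<inter> Cs) \<le> 1")
    case True
    then show ?thesis using small_C[OF d part(1) finV] by fastforce
  next
    case False
    have c2: "2 \<le> card (set D \<inter> Cs)" using False by simp
    obtain p q1 q2 where p: "1 \<le> p" "p \<le> length D" "set (take p D) \<inter> Cs = {q1, q2}" "q1 \<noteq> q2"
      "q2 = D ! (p - 1)" "set (take p D) = insert q2 (set (take (p - 1) D))"
      "set (take (p - 1) D) \<inter> Cs = {q1}" "q2 \<notin> set (take (p - 1) D)"
      by (rule anchors[OF d c2])
    define P where "P = set (take p D)"
    have PV: "P \<subseteq> V" using d set_take_subset[of p D] unfolding P_def by (auto simp: is_dns_def)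
    have qC: "q1 \<in> Cs" "q2 \<in> Cs" "q1 \<in> P" "q2 \<in> P" using p(3) unfolding P_def by auto
    have qV: "q1 \<in> V" "q2 \<in> V" using qC part by auto
    have kc: "length (filter (\<lambda>x. x \<notin> H) D) \<le> card (P - H) + (\<Sum>j\<in>Ss. 2 - card (P \<inter> cnbr V E j))"
      unfolding P_def
    proof (rule key_count[OF sg d p(2) finS, where U = "\<lambda>j. {j}"])
      show "\<forall>i. p \<le> i \<longrightarrow> i < length D \<longrightarrow> D ! i \<notin> H \<longrightarrow>
         (\<exists>j\<in>Ss. \<exists>u\<in>{j}. D ! i \<in> cnbr V E u \<and> card (set (take i D) \<inter> cnbr V E u) \<le> 1)"
      proof (intro allI impI)
        fix i assume i: "p \<le> i" "i < length D" "D ! i \<notin> H"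
        obtain u where u: "u \<in> V" "D ! i \<in> cnbr V E u" "card (set (take i D) \<inter> cnbr V E u) \<le> 1"
          using dns_wit[OF sg d i(2)] by blast
        have sub: "P \<subseteq> set (take i D)" unfolding P_def using set_take_subset_set_take[OF i(1)] .
        have "u \<in> Ss"
        proof (rule ccontr)
          assume "u \<notin> Ss"
          hence uCH: "u \<in> Cs \<or> u \<in> H" using u(1) part(1) by blast
          have "q1 \<in> cnbr V E u" "q2 \<in> cnbr V E u"
            using uCH qC qV CH Ccl sg_sym[OF sg] by (auto simp: cnbr_iff)
          hence "{q1, q2} \<subseteq> set (take i D) \<inter> cnbr V E u" using sub qC by auto
          hence "card {q1, q2} \<le> card (set (take i D) \<inter> cnbr V E u)" by (intro card_mono) auto
          thus False using u(3) p(4) by simp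
        qed
        thus "\<exists>j\<in>Ss. \<exists>u\<in>{j}. D ! i \<in> cnbr V E u \<and> card (set (take i D) \<inter> cnbr V E u) \<le> 1"
          using u by blast
      qed
    qed auto
    have cPH: "card (P - H) = card (P \<inter> Ss) + 2"
    proof -
      have "P - H = (P \<inter> Ss) \<union> {q1, q2}" using PV part p(3) unfolding P_def by auto
      moreover have "(P \<inter> Ss) \<inter> {q1, q2} = {}" using qC part(2) by auto
      ultimately show ?thesis using p(4) finV PV
        by (simp add: card_Un_disjoint finite_subset)
    qed
    have trm: "(if j \<in> P then 1 else 0) + (2 - card (P \<inter> cnbr V E j)) \<le> (1::nat)" if j: "j \<in> Ss" for j
    proof -
      obtain q where q: "q \<in> {q1, q2}" "E j q" using SC j qC p(4) by blast
      have qin: "q \<in> P \<inter> cnbr V E j" using q qC qV by (auto simp: cnbr_iff)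
      have fin: "finite (P \<inter> cnbr V E j)" using PV finV by (auto intro: finite_subset)
      show ?thesis
      proof (cases "j \<in> P")
        case True
        have "j \<in> P \<inter> cnbr V E j" using True j part by (auto simp: cnbr_iff)
        moreover have "j \<noteq> q" using q j qC part(2) by auto
        ultimately have "card {j, q} \<le> card (P \<inter> cnbr V E j)" using qin fin by (intro card_mono) auto
        thus ?thesis using True \<open>j \<noteq> q\<close> by simp
      next
        case False
        have "card {q} \<le> card (P \<inter> cnbr V E j)" using qin fin by (intro card_mono) auto
        thus ?thesis using False by simp
      qed
    qed
    have "card (P \<inter> Ss) + (\<Sum>j\<in>Ss. 2 - card (P \<inter> cnbr V E j))
        = (\<Sum>j\<in>Ss. (if j \<in> P then 1 else 0) + (2 - card (P \<inter> cnbr V E j)))"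
      using card_sum_ind[OF finS, of P] by (simp add: sum.distrib)
    also have "\<dots> \<le> (\<Sum>j\<in>Ss. 1)" by (rule sum_mono) (use trm in auto)
    also have "\<dots> = card Ss" by simp
    finally show ?thesis using kc cPH by linarith
  qed
  show ?thesis using nH nX len_split[of D H] by linarith
qed

lemma two_le_card: "finite A \<Longrightarrow> x \<in> A \<Longrightarrow> y \<in> A \<Longrightarrow> x \<noteq> y \<Longrightarrow> 2 \<le> card A"
  using card_mono[of A "{x, y}"] by auto

locale tw_ctx =
  fixes V :: "'a set" and E Ss Cs H a b s0 D p q1 q2
  assumes sg: "simple_graph V E"
  and part: "V = Ss \<union> Cs \<union> H" "Ss \<inter> Cs = {}" "Ss \<inter> H = {}" "Cs \<inter> H = {}"
  and CH: "\<forall>c\<in>Cs. \<forall>h\<in>H. E c h"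
  and SH: "\<forall>\<sigma>\<in>Ss. \<forall>h\<in>H. \<not> E \<sigma> h"
  and ab: "a \<in> Cs" "b \<in> Cs" "a \<noteq> b"
  and Ccl: "\<forall>c1\<in>Cs. \<forall>c2\<in>Cs. c1 \<noteq> c2 \<longrightarrow> {c1, c2} \<noteq> {a, b} \<longrightarrow> E c1 c2"
  and tw: "\<forall>y. y \<noteq> a \<longrightarrow> y \<noteq> b \<longrightarrow> (E a y \<longleftrightarrow> E b y)"
  and s0: "s0 \<in> Ss" "\<not> E s0 a" "\<not> E s0 b" "\<forall>c\<in>Cs - {a, b}. E s0 c"
  and t4: "\<forall>\<sigma>\<in>Ss - {s0}. E \<sigma> a \<and> E \<sigma> b"
  and t5: "\<forall>\<sigma>\<in>Ss - {s0}. \<forall>c1\<in>Cs. \<forall>c2\<in>Cs. c1 \<noteq> c2 \<longrightarrow> E \<sigma> c1 \<or> E \<sigma> c2"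
  and t6: "\<forall>c\<in>Cs - {a, b}. \<forall>\<sigma>1\<in>Ss - {s0}. \<forall>\<sigma>2\<in>Ss - {s0}. \<sigma>1 \<noteq> \<sigma>2 \<longrightarrow> E \<sigma>1 c \<or> E \<sigma>2 c"
  and t7: "3 \<le> card Ss"
  and d: "is_dns V E D"
  and anc: "1 \<le> p" "p \<le> length D" "set (take p D) \<inter> Cs = {q1, q2}" "q1 \<noteq> q2"
    "q2 = D ! (p - 1)" "set (take p D) = insert q2 (set (take (p - 1) D))"
    "set (take (p - 1) D) \<inter> Cs = {q1}" "q2 \<notin> set (take (p - 1) D)"
begin

abbreviation "P \<equiv> set (take p D)"
abbreviation "P' \<equiv> set (take (p - 1) D)"
abbreviation "nX \<equiv> length (filter (\<lambda>x. x \<notin> H) D)"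

lemma finV: "finite V" using sg by (simp add: simple_graph_def)
lemma finS: "finite Ss" using finV part by (auto intro: finite_subset)
lemma PV: "P \<subseteq> V" using d set_take_subset[of p D] by (auto simp: is_dns_def)
lemma P'P: "P' \<subseteq> P" using anc(6) by blast
lemma finP: "finite P" by simp
lemma qC: "q1 \<in> Cs" "q2 \<in> Cs" "q1 \<in> P" "q2 \<in> P" "q1 \<in> P'"
  using anc(3,7) by auto
lemma qV: "q1 \<in> V" "q2 \<in> V" using qC part by auto
lemma Esym: "E x y \<Longrightarrow> E y x" using sg_sym[OF sg] .
lemma EV: "E x y \<Longrightarrow> x \<in> V \<and> y \<in> V" using sg_V[OF sg] .

lemma cov_CC:
  assumes "x \<in> Cs" "y \<in> Cs" "x = y \<or> {x, y} \<noteq> {a, b} \<or> E a b"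
  shows "x \<in> cnbr V E y"
proof -
  have xV: "x \<in> V" using assms part by auto
  have "x = y \<or> E y x"
  proof (cases "x = y")
    case False
    show ?thesis
    proof (cases "{x, y} = {a, b}")
      case True
      hence "E a b" using assms False by blast
      thus ?thesis using True Esym by (auto simp: doubleton_eq_iff)
    next
      case F2: False
      have "{y, x} \<noteq> {a, b}" using F2 by (metis insert_commute)
      have "E y x" using Ccl[rule_format, of y x] assms(1,2) False \<open>{y, x} \<noteq> {a, b}\<close> by simp
      thus ?thesis by simp
    qed
  qed simp
  thus ?thesis using xV by (simp add: cnbr_iff)
qed

lemma cov_HC: "h \<in> H \<Longrightarrow> c \<in> Cs \<Longrightarrow> c \<in> cnbr V E h \<and> h \<in> cnbr V E c"
  using CH part Esym by (auto simp: cnbr_iff)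

lemma WIT: "\<forall>i. p \<le> i \<longrightarrow> i < length D \<longrightarrow> (\<exists>u. u \<in> V \<and> card (P \<inter> cnbr V E u) \<le> 1 \<and>
     D ! i \<in> cnbr V E u \<and> card (set (take i D) \<inter> cnbr V E u) \<le> 1)"
proof (intro allI impI)
  fix i assume i: "p \<le> i" "i < length D"
  obtain u where u: "u \<in> V" "D ! i \<in> cnbr V E u" "card (set (take i D) \<inter> cnbr V E u) \<le> 1"
    using dns_wit[OF sg d i(2)] by blast
  have "card (P \<inter> cnbr V E u) \<le> card (set (take i D) \<inter> cnbr V E u)"
    using set_take_subset_set_take[OF i(1), of D] by (intro card_mono) auto
  thus "\<exists>u. u \<in> V \<and> card (P \<inter> cnbr V E u) \<le> 1 \<and> D ! i \<in> cnbr V E u \<and> card (set (take i D) \<inter> cnbr V E u) \<le> 1"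
    using u by auto
qed

lemma sat: "x \<in> P \<Longrightarrow> y \<in> P \<Longrightarrow> x \<noteq> y \<Longrightarrow> x \<in> cnbr V E u \<Longrightarrow> y \<in> cnbr V E u \<Longrightarrow> 2 \<le> card (P \<inter> cnbr V E u)"
  by (rule two_le_card[of _ x y]) auto

lemma H_unsat: "u \<in> H \<Longrightarrow> 2 \<le> card (P \<inter> cnbr V E u)"
  using sat[of q1 q2 u] qC anc(4) cov_HC by blast

lemma cPH: "card (P - H) = card (P \<inter> Ss) + 2"
proof -
  have "P - H = (P \<inter> Ss) \<union> {q1, q2}" using PV part anc(3) by auto
  moreover have "(P \<inter> Ss) \<inter> {q1, q2} = {}" using qC part(2) by auto
  ultimately show ?thesis using anc(4) by (simp add: card_Un_disjoint)
qed

definition t :: "'a \<Rightarrow> nat" where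
  "t j = (if j \<in> P then 1 else 0) + (2 - card (P \<inter> cnbr V E j))"

lemma sum_t: "card (P \<inter> Ss) + (\<Sum>j\<in>Ss. 2 - card (P \<inter> cnbr V E j)) = (\<Sum>j\<in>Ss. t j)"
  using card_sum_ind[OF finS, of P] by (simp add: sum.distrib t_def)

lemma t_le1:
  assumes j: "j \<in> Ss" and q: "q \<in> P" "q \<in> Cs" "E j q"
  shows "t j \<le> 1"
proof -
  have qin: "q \<in> P \<inter> cnbr V E j" using q EV by (auto simp: cnbr_iff)
  show ?thesis
  proof (cases "j \<in> P")
    case True
    have "j \<in> P \<inter> cnbr V E j" using True j part by (auto simp: cnbr_iff)
    moreover have "j \<noteq> q" using q j part(2) by auto
    ultimately have "2 \<le> card (P \<inter> cnbr V E j)" using qin by (intro two_le_card) auto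
    thus ?thesis using True by (simp add: t_def)
  next
    case False
    have "card {q} \<le> card (P \<inter> cnbr V E j)" using qin by (intro card_mono) auto
    thus ?thesis using False by (simp add: t_def)
  qed
qed

lemma t_le2: "j \<in> Ss \<Longrightarrow> t j \<le> 2"
proof -
  assume j: "j \<in> Ss"
  show ?thesis
  proof (cases "j \<in> P")
    case True
    have "j \<in> P \<inter> cnbr V E j" using True j part by (auto simp: cnbr_iff)
    hence "card {j} \<le> card (P \<inter> cnbr V E j)" by (intro card_mono) auto
    thus ?thesis using True by (simp add: t_def)
  next
    case False
    thus ?thesis by (simp add: t_def)
  qed
qed

lemma base_count:
  assumes finI: "finite I"
    and W: "\<forall>u\<in>V. card (P \<inter> cnbr V E u) \<le> 1 \<longrightarrow> (\<exists>j\<in>I. u \<in> U j)"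
    and g2: "\<forall>j\<in>I. \<forall>i. p \<le> i \<longrightarrow> i < length D \<longrightarrow> (\<exists>u\<in>U j. D ! i \<in> cnbr V E u) \<longrightarrow> (\<forall>u\<in>U j. D ! i \<in> cnbr V E u)"
    and k: "\<forall>j\<in>I. \<forall>u\<in>U j. k j \<le> card (P \<inter> cnbr V E u)"
  shows "nX \<le> card (P - H) + (\<Sum>j\<in>I. 2 - k j)"
proof (rule key_count[OF sg d anc(2) finI _ g2 k])
  show "\<forall>i. p \<le> i \<longrightarrow> i < length D \<longrightarrow> D ! i \<notin> H \<longrightarrow>
       (\<exists>j\<in>I. \<exists>u\<in>U j. D ! i \<in> cnbr V E u \<and> card (set (take i D) \<inter> cnbr V E u) \<le> 1)"
  proof (intro allI impI)
    fix i assume i: "p \<le> i" "i < length D" "D ! i \<notin> H"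
    obtain u where u: "u \<in> V" "card (P \<inter> cnbr V E u) \<le> 1" "D ! i \<in> cnbr V E u"
      "card (set (take i D) \<inter> cnbr V E u) \<le> 1" using WIT i by blast
    obtain j where "j \<in> I" "u \<in> U j" using W u by blast
    thus "\<exists>j\<in>I. \<exists>u\<in>U j. D ! i \<in> cnbr V E u \<and> card (set (take i D) \<inter> cnbr V E u) \<le> 1"
      using u by blast
  qed
qed

definition goal where
  "goal \<longleftrightarrow> nX \<le> card Ss + 2 \<or> (nX \<le> card Ss + 3 \<and> (\<exists>h0\<in>H. \<forall>y\<in>set D \<inter> H. y \<notin> cnbr V E h0))"

end

context tw_ctx
begin

lemma notP: "p \<le> i \<Longrightarrow> i < length D \<Longrightarrow> D ! i \<notin> P"
proof
  assume i: "p \<le> i" "i < length D" and "D ! i \<in> P"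
  then obtain j where j: "j < p" "D ! i = D ! j" using anc(2) by (auto simp: in_set_conv_nth)
  have dist: "distinct D" using d by (simp add: is_dns_def)
  have "i = j" using j i anc(2) dist nth_eq_iff_index_eq by fastforce
  thus False using i j by simp
qed

lemma case_alpha:
  assumes n1: "q1 \<notin> {a, b}" and n2: "q2 \<notin> {a, b}"
  shows goal
proof -
  have W: "\<forall>u\<in>V. card (P \<inter> cnbr V E u) \<le> 1 \<longrightarrow> (\<exists>j\<in>Ss. u \<in> {j})"
  proof (intro ballI impI)
    fix u assume u: "u \<in> V" "card (P \<inter> cnbr V E u) \<le> 1"
    show "\<exists>j\<in>Ss. u \<in> {j}"
    proof (rule ccontr)
      assume "\<not> (\<exists>j\<in>Ss. u \<in> {j})"
      hence "u \<in> Cs \<or> u \<in> H" using u part by auto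
      thus False
      proof
        assume uC: "u \<in> Cs"
        have "q1 \<in> cnbr V E u" "q2 \<in> cnbr V E u"
          using cov_CC[OF qC(1) uC] cov_CC[OF qC(2) uC] n1 n2 by auto
        thus False using sat[of q1 q2 u] qC anc(4) u(2) by simp
      next
        assume "u \<in> H" thus False using H_unsat u(2) by fastforce
      qed
    qed
  qed
  have bc: "nX \<le> card (P - H) + (\<Sum>j\<in>Ss. 2 - card (P \<inter> cnbr V E j))"
    by (rule base_count[OF finS W]) auto
  have tle: "t j \<le> 1" if j: "j \<in> Ss" for j
  proof (cases "j = s0")
    case True
    have "E s0 q1" using s0(4) qC n1 by blast
    thus ?thesis using t_le1[OF j qC(3) qC(1)] True by simp
  next
    case False
    hence "E j q1 \<or> E j q2" using t5 j qC anc(4) by blast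
    thus ?thesis using t_le1[OF j qC(3) qC(1)] t_le1[OF j qC(4) qC(2)] by blast
  qed
  have "(\<Sum>j\<in>Ss. t j) \<le> (\<Sum>j\<in>Ss. 1)" by (rule sum_mono) (use tle in auto)
  hence "nX \<le> card Ss + 2" using bc cPH sum_t by simp
  thus ?thesis by (simp add: goal_def)
qed

lemma case_beta:
  assumes x: "x \<in> {a, b}" "x' \<in> {a, b}" "x \<noteq> x'" and c: "c \<in> Cs - {a, b}"
    and qq: "{q1, q2} = {x, c}"
  shows goal
proof -
  have xC: "x \<in> Cs" "x' \<in> Cs" using x ab by auto
  have xP: "x \<in> P" "c \<in> P" using qq qC by auto
  have x'S: "x' \<notin> Ss" using xC part by auto
  have xc: "x \<noteq> c" using x c by auto
  have W: "\<forall>u\<in>V. card (P \<inter> cnbr V E u) \<le> 1 \<longrightarrow> (\<exists>j\<in>insert x' Ss. u \<in> {j})"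
  proof (intro ballI impI)
    fix u assume u: "u \<in> V" "card (P \<inter> cnbr V E u) \<le> 1"
    show "\<exists>j\<in>insert x' Ss. u \<in> {j}"
    proof (rule ccontr)
      assume "\<not> (\<exists>j\<in>insert x' Ss. u \<in> {j})"
      hence uu: "u \<in> Cs \<or> u \<in> H" "u \<noteq> x'" using u part by auto
      from uu(1) show False
      proof
        assume uC: "u \<in> Cs"
        have "{x, u} \<noteq> {a, b} \<or> x = u"
          using x uu(2) by (auto simp: doubleton_eq_iff)
        hence "x \<in> cnbr V E u" using cov_CC[OF xC(1) uC] by blast
        moreover have "c \<in> cnbr V E u" using cov_CC[OF _ uC, of c] c by auto
        ultimately have "2 \<le> card (P \<inter> cnbr V E u)" by (rule sat[OF xP xc])
        thus False using u(2) by simp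
      next
        assume "u \<in> H" thus False using H_unsat u(2) by fastforce
      qed
    qed
  qed
  have bc0: "nX \<le> card (P - H) + (\<Sum>j\<in>insert x' Ss. 2 - card (P \<inter> cnbr V E j))"
    by (rule base_count[OF _ W]) (auto simp: finS)
  have bc: "nX \<le> 2 + (\<Sum>j\<in>Ss. t j) + (2 - card (P \<inter> cnbr V E x'))"
    using bc0 cPH sum_t x'S finS by simp
  have cx': "c \<in> P \<inter> cnbr V E x'" using cov_CC[OF _ xC(2), of c] c xP by auto
  have tle: "t j \<le> 1" if j: "j \<in> Ss" for j
  proof (cases "j = s0")
    case True
    have "E s0 c" using s0(4) c by blast
    thus ?thesis using t_le1[OF j xP(2)] c True by simp
  next
    case False
    hence "E j x" using t4 j x by auto
    thus ?thesis using t_le1[OF j xP(1) xC(1)] by blast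
  qed
  show ?thesis
  proof (cases "2 \<le> card (P \<inter> cnbr V E x')")
    case True
    have "(\<Sum>j\<in>Ss. t j) \<le> (\<Sum>j\<in>Ss. 1)" by (rule sum_mono) (use tle in auto)
    hence "nX \<le> card Ss + 2" using bc True by simp
    thus ?thesis by (simp add: goal_def)
  next
    case False
    have one: "P \<inter> cnbr V E x' = {c}"
    proof -
      have "card (P \<inter> cnbr V E x') \<le> 1" using False by simp
      hence "\<forall>y\<in>P \<inter> cnbr V E x'. \<forall>z\<in>P \<inter> cnbr V E x'. y = z"
        using card_le_Suc0_iff_eq[of "P \<inter> cnbr V E x'"] by simp
      thus ?thesis using cx' by blast
    qed
    have g1: "2 - card (P \<inter> cnbr V E x') \<le> 1" using one by simp
    have tle2: "t j \<le> (if \<not> E j c then 1 else 0)" if j: "j \<in> Ss - {s0}" for j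
    proof -
      have Ejx: "E j x" "E j x'" using t4 j x by auto
      have jV: "j \<in> V" using j part by auto
      have "j \<in> cnbr V E x'" using Ejx(2) Esym jV by (auto simp: cnbr_iff)
      hence jP: "j \<notin> P" using one j c part by auto
      have xin: "x \<in> P \<inter> cnbr V E j" using xP Ejx(1) xC part by (auto simp: cnbr_iff)
      show ?thesis
      proof (cases "E j c")
        case True
        have "c \<in> P \<inter> cnbr V E j" using xP True c part by (auto simp: cnbr_iff)
        hence "2 \<le> card (P \<inter> cnbr V E j)" using xin xc by (intro two_le_card) auto
        thus ?thesis using jP True by (simp add: t_def)
      next
        case False
        have "card {x} \<le> card (P \<inter> cnbr V E j)" using xin by (intro card_mono) auto
        thus ?thesis using jP False by (simp add: t_def)
      qed
    qed
    have fin1: "finite (Ss - {s0})" using finS by simp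
    have "(\<Sum>j\<in>Ss - {s0}. t j) \<le> (\<Sum>j\<in>Ss - {s0}. if \<not> E j c then 1 else 0)"
      by (rule sum_mono, rule tle2)
    also have "\<dots> = card {j \<in> Ss - {s0}. \<not> E j c}"
      using sum.inter_filter[OF fin1, of "\<lambda>_. 1::nat" "\<lambda>j. \<not> E j c"] by simp
    also have "\<dots> \<le> 1"
    proof -
      have "\<forall>y\<in>{j \<in> Ss - {s0}. \<not> E j c}. \<forall>z\<in>{j \<in> Ss - {s0}. \<not> E j c}. y = z"
        using t6 c by blast
      thus ?thesis using card_le_Suc0_iff_eq[of "{j \<in> Ss - {s0}. \<not> E j c}"] fin1 by simp
    qed
    finally have s1: "(\<Sum>j\<in>Ss - {s0}. t j) \<le> 1" .
    have "(\<Sum>j\<in>Ss. t j) = t s0 + (\<Sum>j\<in>Ss - {s0}. t j)"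
      using sum.remove[OF finS s0(1)] by simp
    moreover have "t s0 \<le> 1" using tle s0(1) by blast
    ultimately have "(\<Sum>j\<in>Ss. t j) \<le> 2" using s1 by simp
    hence "nX \<le> 5" using bc g1 by simp
    thus ?thesis using t7 by (simp add: goal_def)
  qed
qed

lemma case_gamma:
  assumes n1: "q1 \<in> {a, b}" and n2: "q2 \<in> {a, b}"
  shows goal
proof -
  have qab: "{q1, q2} = {a, b}" using n1 n2 anc(4) ab(3) by auto
  have abP: "a \<in> P" "b \<in> P" using qab qC by auto
  have abV: "a \<in> V" "b \<in> V" using ab part by auto
  have aS: "a \<notin> Ss" using ab part by auto
  have Wg: "u \<in> Ss \<or> u \<in> {a, b}" if u: "u \<in> V" "card (P \<inter> cnbr V E u) \<le> 1" for u
  proof (rule ccontr)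
    assume "\<not> (u \<in> Ss \<or> u \<in> {a, b})"
    hence uu: "u \<in> Cs \<or> u \<in> H" "u \<notin> {a, b}" using u part by auto
    from uu(1) show False
    proof
      assume uC: "u \<in> Cs"
      have "q1 \<in> cnbr V E u" "q2 \<in> cnbr V E u"
        using cov_CC[OF qC(1) uC] cov_CC[OF qC(2) uC] uu(2) by (auto simp: doubleton_eq_iff)
      thus False using sat[of q1 q2 u] qC anc(4) u(2) by simp
    next
      assume "u \<in> H" thus False using H_unsat u(2) by fastforce
    qed
  qed
  define U where "U j = (if j = a then {a, b} else {j})" for j
  define k where "k j = (if j = a then min (card (P \<inter> cnbr V E a)) (card (P \<inter> cnbr V E b))
                           else card (P \<inter> cnbr V E j))" for j
  have W: "\<forall>u\<in>V. card (P \<inter> cnbr V E u) \<le> 1 \<longrightarrow> (\<exists>j\<in>insert a Ss. u \<in> U j)"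
  proof (intro ballI impI)
    fix u assume u: "u \<in> V" "card (P \<inter> cnbr V E u) \<le> 1"
    from Wg[OF u] show "\<exists>j\<in>insert a Ss. u \<in> U j"
    proof
      assume "u \<in> Ss" thus ?thesis using aS by (intro bexI[of _ u]) (auto simp: U_def)
    next
      assume "u \<in> {a, b}" thus ?thesis by (intro bexI[of _ a]) (auto simp: U_def)
    qed
  qed
  have g2: "\<forall>j\<in>insert a Ss. \<forall>i. p \<le> i \<longrightarrow> i < length D \<longrightarrow> (\<exists>u\<in>U j. D ! i \<in> cnbr V E u) \<longrightarrow> (\<forall>u\<in>U j. D ! i \<in> cnbr V E u)"
  proof (intro ballI allI impI)
    fix j i u' assume j: "j \<in> insert a Ss" and i: "p \<le> i" "i < length D"
      and ex: "\<exists>u\<in>U j. D ! i \<in> cnbr V E u" and u': "u' \<in> U j"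
    show "D ! i \<in> cnbr V E u'"
    proof (cases "j = a")
      case True
      have nab: "D ! i \<noteq> a" "D ! i \<noteq> b" using notP[OF i] abP by auto
      have "E a (D ! i) \<longleftrightarrow> E b (D ! i)" using tw nab by blast
      thus ?thesis using ex u' True nab by (auto simp: U_def cnbr_iff)
    next
      case False
      thus ?thesis using ex u' by (auto simp: U_def)
    qed
  qed
  have kk: "\<forall>j\<in>insert a Ss. \<forall>u\<in>U j. k j \<le> card (P \<inter> cnbr V E u)"
    by (auto simp: U_def k_def)
  have bc0: "nX \<le> card (P - H) + (\<Sum>j\<in>insert a Ss. 2 - k j)"
    by (rule base_count[OF _ W g2 kk]) (simp add: finS)
  define g where "g = 2 - min (card (P \<inter> cnbr V E a)) (card (P \<inter> cnbr V E b))"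
  have "(\<Sum>j\<in>insert a Ss. 2 - k j) = g + (\<Sum>j\<in>Ss. 2 - k j)"
    using aS finS by (simp add: k_def g_def)
  also have "(\<Sum>j\<in>Ss. 2 - k j) = (\<Sum>j\<in>Ss. 2 - card (P \<inter> cnbr V E j))"
    using aS by (intro sum.cong) (auto simp: k_def)
  finally have bc: "nX \<le> 2 + (\<Sum>j\<in>Ss. t j) + g" using bc0 cPH sum_t by simp
  define m where "m = card (P \<inter> (Ss - {s0}))"
  have fin1: "finite (Ss - {s0})" using finS by simp
  have tS: "t j \<le> (if j \<in> P then 1 else 0)" if j: "j \<in> Ss - {s0}" for j
  proof -
    have "E j a" "E j b" using t4 j by auto
    hence "a \<in> P \<inter> cnbr V E j" "b \<in> P \<inter> cnbr V E j" using abP abV by (auto simp: cnbr_iff)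
    hence "2 \<le> card (P \<inter> cnbr V E j)" using ab(3) by (intro two_le_card) auto
    thus ?thesis by (simp add: t_def)
  qed
  have "(\<Sum>j\<in>Ss - {s0}. t j) \<le> (\<Sum>j\<in>Ss - {s0}. if j \<in> P then 1 else 0)"
    by (rule sum_mono, rule tS)
  also have "\<dots> = m" unfolding m_def using card_sum_ind[OF fin1, of P] by simp
  finally have sm: "(\<Sum>j\<in>Ss - {s0}. t j) \<le> m" .
  have "(\<Sum>j\<in>Ss. t j) = t s0 + (\<Sum>j\<in>Ss - {s0}. t j)"
    using sum.remove[OF finS s0(1)] by simp
  hence st: "(\<Sum>j\<in>Ss. t j) \<le> 2 + m" using sm t_le2[OF s0(1)] by simp
  have ga: "a \<in> P \<inter> cnbr V E a" "b \<in> P \<inter> cnbr V E b" using abP abV by (auto simp: cnbr_iff)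
  have g1: "g \<le> 1"
  proof -
    have "card {a} \<le> card (P \<inter> cnbr V E a)" "card {b} \<le> card (P \<inter> cnbr V E b)"
      using ga by (intro card_mono; auto)+
    thus ?thesis by (simp add: g_def)
  qed
  have sat_ab: "2 \<le> card (P \<inter> cnbr V E u)" if m1: "1 \<le> m" and u: "u \<in> {a, b}" for u
  proof -
    obtain z where z: "z \<in> P" "z \<in> Ss - {s0}"
      using m1 unfolding m_def by (metis card.empty disjoint_iff not_one_le_zero)
    have "E z u" using t4 z u by auto
    hence "z \<in> cnbr V E u" "u \<in> cnbr V E u" using Esym EV u abV by (auto simp: cnbr_iff)
    moreover have "z \<noteq> u" using z u part ab by auto
    moreover have "u \<in> P" using u abP by auto
    ultimately show ?thesis using sat[of z u u] z by simp
  qed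
  have g0: "g = 0" if m1: "1 \<le> m"
    using sat_ab[OF m1, of a] sat_ab[OF m1, of b] by (simp add: g_def)
  have mle: "m + 1 \<le> card Ss"
  proof -
    have "m \<le> card (Ss - {s0})" unfolding m_def using fin1 by (intro card_mono) auto
    thus ?thesis using s0(1) finS card_Diff_singleton[OF s0(1)] t7 by simp
  qed
  have pl: "p - 1 < length D" using anc(1,2) by simp
  obtain w where w: "w \<in> V" "q2 \<in> cnbr V E w" "card (P' \<inter> cnbr V E w) \<le> 1"
    using dns_wit[OF sg d pl] anc(5) by blast
  have sat': False if "x \<in> P'" "y \<in> P'" "x \<noteq> y" "x \<in> cnbr V E w" "y \<in> cnbr V E w" for x y
    using two_le_card[of "P' \<inter> cnbr V E w" x y] that w(3) by simp
  have q1w: "q1 \<in> cnbr V E w" if "w \<in> Cs - {a, b} \<or> w \<in> H \<or> w \<in> Ss - {s0}"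
    using that
  proof (elim disjE)
    assume "w \<in> Cs - {a, b}"
    thus ?thesis using cov_CC[OF qC(1), of w] by (auto simp: doubleton_eq_iff)
  next
    assume "w \<in> H" thus ?thesis using cov_HC qC by blast
  next
    assume "w \<in> Ss - {s0}"
    hence "E w q1" using t4 n1 by auto
    thus ?thesis using qV by (simp add: cnbr_iff)
  qed
  have key: "m \<le> 1 \<or> m + 2 \<le> card Ss \<or> (\<exists>h0\<in>H. \<forall>y\<in>set D \<inter> H. y \<notin> cnbr V E h0)"
  proof -
    have "w \<in> H \<or> w \<in> Ss \<or> w \<in> Cs" using w(1) part by auto
    moreover
    {
      assume wH: "w \<in> H"
      have ?thesis
      proof (cases "m \<le> 1")
        case False
        hence m1: "1 \<le> m" by simp
        have "\<forall>y\<in>set D \<inter> H. y \<notin> cnbr V E w"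
        proof (intro ballI notI)
          fix y assume y: "y \<in> set D \<inter> H" and yw: "y \<in> cnbr V E w"
          obtain i where i: "i < length D" "y = D ! i" using y by (auto simp: in_set_conv_nth)
          show False
          proof (cases "i < p")
            case True
            hence "y \<in> P" using i by (auto simp: in_set_conv_nth intro!: exI[of _ i])
            moreover have "y \<noteq> q2" using y qC part by auto
            ultimately have "y \<in> P'" using anc(6) by auto
            moreover have "y \<noteq> q1" using y qC part by auto
            ultimately show False using sat'[of q1 y] qC(5) q1w wH yw by blast
          next
            case False
            obtain u where u: "u \<in> V" "card (P \<inter> cnbr V E u) \<le> 1" "y \<in> cnbr V E u"
            proof -
              have "p \<le> i" using False by simp
              from WIT[rule_format, OF this i(1)] show ?thesis using that i(2) by blast
            qed
            have "u \<in> Ss \<or> u \<in> {a, b}" using Wg u by blast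
            moreover have "u \<notin> Ss"
            proof
              assume uS: "u \<in> Ss"
              have "y = u \<or> E u y" using u(3) by (simp add: cnbr_iff)
              thus False using uS y SH part by auto
            qed
            ultimately have "u \<in> {a, b}" by blast
            thus False using sat_ab[OF m1] u(2) by fastforce
          qed
        qed
        thus ?thesis using wH by blast
      qed simp
    }
    moreover
    {
      assume wS: "w \<in> Ss"
      have ws0: "w \<noteq> s0"
      proof
        assume "w = s0"
        hence "q2 = s0 \<or> E s0 q2" using w(2) by (simp add: cnbr_iff)
        thus False using s0 n2 qC part by auto
      qed
      have "w \<notin> P'"
      proof
        assume "w \<in> P'"
        moreover have "w \<in> cnbr V E w" using w(1) by (simp add: cnbr_iff)
        moreover have "w \<noteq> q1" using wS qC part by auto
        ultimately show False using sat'[of w q1] qC(5) q1w wS ws0 by blast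
      qed
      moreover have "w \<noteq> q2" using wS qC part by auto
      ultimately have wP: "w \<notin> P" using anc(6) by auto
      have "P \<inter> (Ss - {s0}) \<subseteq> Ss - {s0} - {w}" using wP by auto
      hence "m \<le> card (Ss - {s0} - {w})" unfolding m_def using fin1 by (intro card_mono) auto
      moreover have "card (Ss - {s0} - {w}) + 2 = card Ss"
        using wS ws0 s0(1) finS t7 by (simp add: card_Diff_singleton_if)
      ultimately have ?thesis by simp
    }
    moreover
    {
      assume wC: "w \<in> Cs"
      have ?thesis
      proof (cases "w \<in> {a, b}")
        case False
        have "P \<inter> (Ss - {s0}) \<subseteq> {j \<in> Ss - {s0}. \<not> E j w}"
        proof
          fix j assume j: "j \<in> P \<inter> (Ss - {s0})"
          have "j \<noteq> q2" "j \<noteq> q1" using j qC part by auto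
          hence jP': "j \<in> P'" using j anc(6) by auto
          have "\<not> E j w"
          proof
            assume "E j w"
            hence "j \<in> cnbr V E w" using j part EV Esym by (auto simp: cnbr_iff)
            moreover have "q1 \<in> cnbr V E w" using q1w wC \<open>w \<notin> {a, b}\<close> by blast
            ultimately show False using sat'[OF jP' qC(5) \<open>j \<noteq> q1\<close>] by blast
          qed
          thus "j \<in> {j \<in> Ss - {s0}. \<not> E j w}" using j by auto
        qed
        hence "m \<le> card {j \<in> Ss - {s0}. \<not> E j w}" unfolding m_def using fin1 by (intro card_mono) auto
        moreover have "card {j \<in> Ss - {s0}. \<not> E j w} \<le> 1"
        proof -
          have "\<forall>y\<in>{j \<in> Ss - {s0}. \<not> E j w}. \<forall>z\<in>{j \<in> Ss - {s0}. \<not> E j w}. y = z"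
            using t6 wC False by blast
          thus ?thesis using card_le_Suc0_iff_eq[of "{j \<in> Ss - {s0}. \<not> E j w}"] fin1 by simp
        qed
        ultimately show ?thesis by simp
      next
        case True
        hence "P \<inter> (Ss - {s0}) \<subseteq> P' \<inter> cnbr V E w"
        proof -
          have "j \<in> P' \<inter> cnbr V E w" if j: "j \<in> P \<inter> (Ss - {s0})" for j
          proof -
            have "j \<noteq> q2" using j qC part by auto
            hence "j \<in> P'" using j anc(6) by auto
            moreover have "E w j" using t4 j True Esym by auto
            ultimately show ?thesis using j part by (auto simp: cnbr_iff)
          qed
          thus ?thesis by blast
        qed
        hence "m \<le> card (P' \<inter> cnbr V E w)" unfolding m_def by (intro card_mono) auto
        thus ?thesis using w(3) by simp
      qed
    }
    ultimately show ?thesis by blast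
  qed
  show ?thesis
  proof (cases "m = 0")
    case True
    hence "nX \<le> 5" using bc st g1 by simp
    thus ?thesis using t7 by (simp add: goal_def)
  next
    case False
    hence m1: "1 \<le> m" by simp
    have nle: "nX \<le> 4 + m" using bc st g0[OF m1] by simp
    from key show ?thesis
    proof (elim disjE)
      assume "m \<le> 1" thus ?thesis using nle t7 by (simp add: goal_def)
    next
      assume "m + 2 \<le> card Ss" thus ?thesis using nle by (simp add: goal_def)
    next
      assume "\<exists>h0\<in>H. \<forall>y\<in>set D \<inter> H. y \<notin> cnbr V E h0"
      thus ?thesis using nle mle by (simp add: goal_def)
    qed
  qed
qed

end

lemma twin_bound:
  fixes V :: "'a set"
  assumes sg: "simple_graph V E"
  and part: "V = Ss \<union> Cs \<union> H" "Ss \<inter> Cs = {}" "Ss \<inter> H = {}" "Cs \<inter> H = {}"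
  and CH: "\<forall>c\<in>Cs. \<forall>h\<in>H. E c h"
  and SH: "\<forall>\<sigma>\<in>Ss. \<forall>h\<in>H. \<not> E \<sigma> h"
  and ab: "a \<in> Cs" "b \<in> Cs" "a \<noteq> b"
  and Ccl: "\<forall>c1\<in>Cs. \<forall>c2\<in>Cs. c1 \<noteq> c2 \<longrightarrow> {c1, c2} \<noteq> {a, b} \<longrightarrow> E c1 c2"
  and tw: "\<forall>y. y \<noteq> a \<longrightarrow> y \<noteq> b \<longrightarrow> (E a y \<longleftrightarrow> E b y)"
  and sz: "sz \<in> Ss" "\<not> E sz a" "\<not> E sz b" "\<forall>c\<in>Cs - {a, b}. E sz c"
  and t4: "\<forall>\<sigma>\<in>Ss - {sz}. E \<sigma> a \<and> E \<sigma> b"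
  and t5: "\<forall>\<sigma>\<in>Ss - {sz}. \<forall>c1\<in>Cs. \<forall>c2\<in>Cs. c1 \<noteq> c2 \<longrightarrow> E \<sigma> c1 \<or> E \<sigma> c2"
  and t6: "\<forall>c\<in>Cs - {a, b}. \<forall>\<sigma>1\<in>Ss - {sz}. \<forall>\<sigma>2\<in>Ss - {sz}. \<sigma>1 \<noteq> \<sigma>2 \<longrightarrow> E \<sigma>1 c \<or> E \<sigma>2 c"
  and t7: "3 \<le> card Ss"
  and d: "is_dns V E D"
  shows "length D \<le> gamma_dns H (induced E H) + card Ss + 2"
proof -
  have finV: "finite V" using sg by (simp add: simple_graph_def)
  have HV: "H \<subseteq> V" using part by blast
  have Hp: "\<forall>h\<in>H. \<forall>u\<in>cnbr V E h. u \<notin> H \<longrightarrow> (\<forall>h'\<in>H. E u h')"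
    using setup_H[OF sg part(1) CH SH] .
  have nH: "length (filter (\<lambda>x. x \<in> H) D) \<le> gamma_dns H (induced E H)"
    using filter_H_le[OF sg HV d Hp] .
  have LS: "length D = length (filter (\<lambda>x. x \<in> H) D) + length (filter (\<lambda>x. x \<notin> H) D)"
    by (rule len_split)
  show ?thesis
  proof (cases "card (set D \<inter> Cs) \<le> 1")
    case True
    have "length (filter (\<lambda>x. x \<notin> H) D) \<le> card Ss + 1" using small_C[OF d part(1) finV True] .
    thus ?thesis using nH LS by linarith
  next
    case False
    have c2: "2 \<le> card (set D \<inter> Cs)" using False by simp
    obtain p q1 q2 where anc: "1 \<le> p" "p \<le> length D" "set (take p D) \<inter> Cs = {q1, q2}" "q1 \<noteq> q2"
      "q2 = D ! (p - 1)" "set (take p D) = insert q2 (set (take (p - 1) D))"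
      "set (take (p - 1) D) \<inter> Cs = {q1}" "q2 \<notin> set (take (p - 1) D)"
      by (rule anchors[OF d c2])
    interpret T: tw_ctx V E Ss Cs H a b sz D p q1 q2
      by (unfold_locales) (fact assms anc)+
    have qC: "q1 \<in> Cs" "q2 \<in> Cs" using T.qC by auto
    have G: T.goal
    proof (cases "q1 \<in> {a, b}")
      case True
      note q1ab = True
      show ?thesis
      proof (cases "q2 \<in> {a, b}")
        case True
        thus ?thesis using T.case_gamma q1ab by blast
      next
        case False
        define x' where "x' = (if q1 = a then b else a)"
        have "x' \<in> {a, b}" "q1 \<noteq> x'" using q1ab ab(3) by (auto simp: x'_def)
        moreover have "q2 \<in> Cs - {a, b}" using False qC by auto
        ultimately show ?thesis using T.case_beta[of q1 x' q2] q1ab by blast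
      qed
    next
      case False
      note q1n = False
      show ?thesis
      proof (cases "q2 \<in> {a, b}")
        case True
        define x' where "x' = (if q2 = a then b else a)"
        have "x' \<in> {a, b}" "q2 \<noteq> x'" using True ab(3) by (auto simp: x'_def)
        moreover have "q1 \<in> Cs - {a, b}" using q1n qC by auto
        moreover have "{q1, q2} = {q2, q1}" by auto
        ultimately show ?thesis using T.case_beta[of q2 x' q1] True by blast
      next
        case False
        thus ?thesis using T.case_alpha q1n by blast
      qed
    qed
    show ?thesis
    proof (cases "length (filter (\<lambda>x. x \<notin> H) D) \<le> card Ss + 2")
      case True
      thus ?thesis using nH LS by linarith
    next
      case False
      then obtain h0 where h0: "h0 \<in> H" "\<forall>y\<in>set D \<inter> H. y \<notin> cnbr V E h0"
        and nX: "length (filter (\<lambda>x. x \<notin> H) D) \<le> card Ss + 3"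
        using G unfolding T.goal_def by blast
      have "length (filter (\<lambda>x. x \<in> H) D) + 1 \<le> gamma_dns H (induced E H)"
        using filter_H_slack[OF sg HV d Hp h0] .
      thus ?thesis using nX LS by linarith
    qed
  qed
qed

lemma ft_sg:
  assumes sg: "simple_graph V E" and w: "w \<notin> V" and v: "v \<in> V"
  shows "simple_graph (insert w V) (false_twin_edges E v w)"
    and "simple_graph (insert w V) (true_twin_edges E v w)"
  using assms unfolding simple_graph_def false_twin_edges_def true_twin_edges_def
  by (auto dest: sg_V[OF sg])

lemma ft_simp:
  assumes sg: "simple_graph V E" and w: "w \<notin> V"
  shows "false_twin_edges E v w x y \<longleftrightarrow>
    (x \<noteq> w \<and> y \<noteq> w \<and> E x y) \<or> (x = w \<and> y \<noteq> w \<and> E v y) \<or> (y = w \<and> x \<noteq> w \<and> E x v)"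
  using w sg_V[OF sg] unfolding false_twin_edges_def by blast

lemma tt_simp:
  "true_twin_edges E v w x y \<longleftrightarrow> false_twin_edges E v w x y \<or> (x = w \<and> y = v) \<or> (x = v \<and> y = w)"
  unfolding true_twin_edges_def by blast

locale spider_ctx =
  fixes V :: "'a set" and E r s c H w
  assumes spider: "thick_spider V E r s c H"
    and r3: "r \<ge> 3"
    and w_new: "w \<notin> V"
begin

lemma sg: "simple_graph V E" using spider unfolding thick_spider_def by (elim conjE) assumption
lemma injs: "inj_on s {1..r}" using spider unfolding thick_spider_def by (elim conjE) assumption
lemma injc: "inj_on c {1..r}" using spider unfolding thick_spider_def by (elim conjE) assumption
lemma Vdef: "V = s ` {1..r} \<union> c ` {1..r} \<union> H" using spider unfolding thick_spider_def by (elim conjE) assumption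
lemma disj1: "s ` {1..r} \<inter> c ` {1..r} = {}" using spider unfolding thick_spider_def by (elim conjE) assumption
lemma disj2: "s ` {1..r} \<inter> H = {}" using spider unfolding thick_spider_def by (elim conjE) assumption
lemma disj3: "c ` {1..r} \<inter> H = {}" using spider unfolding thick_spider_def by (elim conjE) assumption
lemmas disj = disj1 disj2 disj3

lemma sV: "i \<in> {1..r} \<Longrightarrow> s i \<in> V" using Vdef by auto
lemma cV: "i \<in> {1..r} \<Longrightarrow> c i \<in> V" using Vdef by auto
lemma HV: "H \<subseteq> V" using Vdef by auto
lemma sw: "i \<in> {1..r} \<Longrightarrow> s i \<noteq> w" using sV w_new by blast
lemma cw: "i \<in> {1..r} \<Longrightarrow> c i \<noteq> w" using cV w_new by blast
lemma hw: "h \<in> H \<Longrightarrow> h \<noteq> w" using HV w_new by blast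
lemma sc: "i \<in> {1..r} \<Longrightarrow> j \<in> {1..r} \<Longrightarrow> s i \<noteq> c j" using disj(1) by blast
lemma sh: "i \<in> {1..r} \<Longrightarrow> h \<in> H \<Longrightarrow> s i \<noteq> h" using disj(2) by blast
lemma ch: "i \<in> {1..r} \<Longrightarrow> h \<in> H \<Longrightarrow> c i \<noteq> h" using disj(3) by blast
lemma s_eq: "i \<in> {1..r} \<Longrightarrow> j \<in> {1..r} \<Longrightarrow> s i = s j \<longleftrightarrow> i = j" using injs by (auto dest: inj_onD)
lemma c_eq: "i \<in> {1..r} \<Longrightarrow> j \<in> {1..r} \<Longrightarrow> c i = c j \<longleftrightarrow> i = j" using injc by (auto dest: inj_onD)

lemma Ess0: "\<forall>i\<in>{1..r}. \<forall>j\<in>{1..r}. \<not> E (s i) (s j)" using spider unfolding thick_spider_def by (elim conjE) assumption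
lemma Ecc0: "\<forall>i\<in>{1..r}. \<forall>j\<in>{1..r}. i \<noteq> j \<longrightarrow> E (c i) (c j)" using spider unfolding thick_spider_def by (elim conjE) assumption
lemma Ech0: "\<forall>i\<in>{1..r}. \<forall>h\<in>H. E (c i) h" using spider unfolding thick_spider_def by (elim conjE) assumption
lemma Esh0: "\<forall>i\<in>{1..r}. \<forall>h\<in>H. \<not> E (s i) h" using spider unfolding thick_spider_def by (elim conjE) assumption
lemma Esc0: "\<forall>i\<in>{1..r}. \<forall>j\<in>{1..r}. E (s i) (c j) \<longleftrightarrow> i \<noteq> j" using spider unfolding thick_spider_def by (elim conjE) assumption
lemma Ess: "i \<in> {1..r} \<Longrightarrow> j \<in> {1..r} \<Longrightarrow> \<not> E (s i) (s j)" using Ess0 by blast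
lemma Ecc: "i \<in> {1..r} \<Longrightarrow> j \<in> {1..r} \<Longrightarrow> E (c i) (c j) \<longleftrightarrow> i \<noteq> j"
  using Ecc0 sg_irr[OF sg] by blast
lemma Esc: "i \<in> {1..r} \<Longrightarrow> j \<in> {1..r} \<Longrightarrow> E (s i) (c j) \<longleftrightarrow> i \<noteq> j" using Esc0 by blast
lemma Ecs: "i \<in> {1..r} \<Longrightarrow> j \<in> {1..r} \<Longrightarrow> E (c j) (s i) \<longleftrightarrow> i \<noteq> j"
  using Esc sg_sym[OF sg] by blast
lemma Ech: "i \<in> {1..r} \<Longrightarrow> h \<in> H \<Longrightarrow> E (c i) h" using Ech0 by blast
lemma Ehc: "i \<in> {1..r} \<Longrightarrow> h \<in> H \<Longrightarrow> E h (c i)" using Ech sg_sym[OF sg] by blast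
lemma Esh: "i \<in> {1..r} \<Longrightarrow> h \<in> H \<Longrightarrow> \<not> E (s i) h" using Esh0 by blast
lemma Ehs: "i \<in> {1..r} \<Longrightarrow> h \<in> H \<Longrightarrow> \<not> E h (s i)" using Esh sg_sym[OF sg] by blast
lemma Ew: "\<not> E w x" "\<not> E x w" using w_new sg_V[OF sg] by blast+

lemma r1: "r \<in> {1..r}" "1 \<in> {1..r}" "2 \<in> {1..r}" using r3 by auto

lemmas facts = sw cw hw sc sh ch s_eq c_eq Ess Ecc Esc Ecs Ech Ehc Esh Ehs Ew r1
  sw[symmetric] cw[symmetric] hw[symmetric] sc[symmetric] sh[symmetric] ch[symmetric]

lemma cardS: "card (s ` {1..r}) = r" using card_image[OF injs] by simp

lemma upper_G: "gamma_dns V E \<le> gamma_dns H (induced E H) + r + 2"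
proof (rule gamma_le[OF sg])
  fix D assume d: "is_dns V E D"
  have "length D \<le> gamma_dns H (induced E H) + card (s ` {1..r}) + 2"
  proof (rule clique_bound[OF sg Vdef disj(1) disj(2) disj(3) _ _ _ _ d])
    show "\<forall>c\<in>c ` {1..r}. \<forall>h\<in>H. E c h" using Ech by blast
    show "\<forall>\<sigma>\<in>s ` {1..r}. \<forall>h\<in>H. \<not> E \<sigma> h" using Esh by blast
    show "\<forall>c1\<in>c ` {1..r}. \<forall>c2\<in>c ` {1..r}. c1 \<noteq> c2 \<longrightarrow> E c1 c2" using Ecc by blast
    show "\<forall>\<sigma>\<in>s ` {1..r}. \<forall>c1\<in>c ` {1..r}. \<forall>c2\<in>c ` {1..r}. c1 \<noteq> c2 \<longrightarrow> E \<sigma> c1 \<or> E \<sigma> c2"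
      using Esc by blast
  qed
  thus "length D \<le> gamma_dns H (induced E H) + r + 2" using cardS by simp
qed

definition EE :: "bool \<Rightarrow> 'a \<Rightarrow> 'a \<Rightarrow> 'a \<Rightarrow> bool" where
  "EE tr v = (if tr then true_twin_edges E v w else false_twin_edges E v w)"

lemma EE_simp: "EE tr v x y \<longleftrightarrow>
    (x \<noteq> w \<and> y \<noteq> w \<and> E x y) \<or> (x = w \<and> y \<noteq> w \<and> E v y) \<or> (y = w \<and> x \<noteq> w \<and> E x v)
    \<or> (tr \<and> ((x = w \<and> y = v) \<or> (x = v \<and> y = w)))"
  unfolding EE_def using ft_simp[OF sg w_new, of v x y] tt_simp[of E v w x y] by auto

lemma EE_sg: "v \<in> V \<Longrightarrow> simple_graph (insert w V) (EE tr v)"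
  unfolding EE_def using ft_sg[OF sg w_new] by auto

lemma cardSw: "card (insert w (s ` {1..r})) = r + 1"
proof -
  have "w \<notin> s ` {1..r}" using sV w_new by blast
  thus ?thesis using cardS by simp
qed

lemma upper_S: "gamma_dns (insert w V) (EE tr (s r)) \<le> gamma_dns H (induced E H) + r + 3"
proof (rule gamma_le[OF EE_sg[OF sV[OF r1(1)]]])
  fix D assume d: "is_dns (insert w V) (EE tr (s r)) D"
  let ?E = "EE tr (s r)"
  have part: "insert w V = insert w (s ` {1..r}) \<union> c ` {1..r} \<union> H" using Vdef by auto
  have dj: "insert w (s ` {1..r}) \<inter> c ` {1..r} = {}" "insert w (s ` {1..r}) \<inter> H = {}"
    using disj cV HV w_new by auto
  have "length D \<le> gamma_dns H (induced ?E H) + card (insert w (s ` {1..r})) + 2"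
  proof (rule clique_bound[OF EE_sg[OF sV[OF r1(1)]] part dj disj(3) _ _ _ _ d])
    show "\<forall>x\<in>c ` {1..r}. \<forall>h\<in>H. ?E x h" using Ech cw hw by (auto simp: EE_simp)
    show "\<forall>\<sigma>\<in>insert w (s ` {1..r}). \<forall>h\<in>H. \<not> ?E \<sigma> h"
    proof (intro ballI)
      fix \<sigma> h assume \<sigma>: "\<sigma> \<in> insert w (s ` {1..r})" and h: "h \<in> H"
      have "h \<noteq> w" "h \<noteq> s r" "\<not> E (s r) h" using hw[OF h] sh[OF r1(1) h] Esh[OF r1(1) h] by auto
      moreover have "\<sigma> \<noteq> w \<Longrightarrow> \<not> E \<sigma> h" using \<sigma> Esh h by auto
      ultimately show "\<not> ?E \<sigma> h" by (auto simp: EE_simp)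
    qed
    show "\<forall>c1\<in>c ` {1..r}. \<forall>c2\<in>c ` {1..r}. c1 \<noteq> c2 \<longrightarrow> ?E c1 c2"
      using Ecc cw by (auto simp: EE_simp)
    show "\<forall>\<sigma>\<in>insert w (s ` {1..r}). \<forall>c1\<in>c ` {1..r}. \<forall>c2\<in>c ` {1..r}. c1 \<noteq> c2 \<longrightarrow> ?E \<sigma> c1 \<or> ?E \<sigma> c2"
    proof (intro ballI impI)
      fix \<sigma> c1 c2 assume \<sigma>: "\<sigma> \<in> insert w (s ` {1..r})" and c1: "c1 \<in> c ` {1..r}" and c2: "c2 \<in> c ` {1..r}"
        and ne: "c1 \<noteq> c2"
      obtain j k where jk: "j \<in> {1..r}" "k \<in> {1..r}" "c1 = c j" "c2 = c k" using c1 c2 by blast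
      have "j \<noteq> k" using ne jk by auto
      obtain i where i: "i \<in> {1..r}" "\<sigma> = w \<and> i = r \<or> \<sigma> = s i" using \<sigma> r1(1) by blast
      have "i \<noteq> j \<or> i \<noteq> k" using \<open>j \<noteq> k\<close> by auto
      hence "E (s i) c1 \<or> E (s i) c2" using Esc i jk by auto
      moreover have "c1 \<noteq> w" "c2 \<noteq> w" using jk cw by auto
      ultimately show "?E \<sigma> c1 \<or> ?E \<sigma> c2" using i sw by (auto simp: EE_simp)
    qed
  qed
  moreover have "induced ?E H = induced E H"
    using hw by (auto simp: induced_def EE_simp fun_eq_iff)
  ultimately show "length D \<le> gamma_dns H (induced E H) + r + 3" using cardSw by simp
qed

lemma upper_C: "gamma_dns (insert w V) (EE tr (c r)) \<le> gamma_dns H (induced E H) + r + 2"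
proof (rule gamma_le[OF EE_sg[OF cV[OF r1(1)]]])
  fix D assume d: "is_dns (insert w V) (EE tr (c r)) D"
  let ?E = "EE tr (c r)"
  let ?S = "s ` {1..r}" and ?C = "insert w (c ` {1..r})"
  have part: "insert w V = ?S \<union> ?C \<union> H" using Vdef by auto
  have dj: "?S \<inter> ?C = {}" "?C \<inter> H = {}"
    using disj sV HV w_new by auto
  have crw: "c r \<noteq> w" using cw r1 by auto
  have "length D \<le> gamma_dns H (induced ?E H) + card ?S + 2"
  proof (rule twin_bound[OF EE_sg[OF cV[OF r1(1)]] part dj(1) disj(2) dj(2), where a = "c r" and b = w and sz = "s r"])
    show "\<forall>x\<in>?C. \<forall>h\<in>H. ?E x h" using Ech cw hw r1 by (auto simp: EE_simp)
    show "\<forall>\<sigma>\<in>?S. \<forall>h\<in>H. \<not> ?E \<sigma> h" using Esh sw hw ch r1 by (auto simp: EE_simp)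
    show "c r \<in> ?C" "w \<in> ?C" "c r \<noteq> w" using r1 crw by auto
    show "\<forall>c1\<in>?C. \<forall>c2\<in>?C. c1 \<noteq> c2 \<longrightarrow> {c1, c2} \<noteq> {c r, w} \<longrightarrow> ?E c1 c2"
    proof (intro ballI impI)
      fix c1 c2 assume c1: "c1 \<in> ?C" and c2: "c2 \<in> ?C" and ne: "c1 \<noteq> c2" and nab: "{c1, c2} \<noteq> {c r, w}"
      show "?E c1 c2"
      proof (cases "c1 = w")
        case True
        then obtain k where k: "k \<in> {1..r}" "c2 = c k" using c2 ne by auto
        have "k \<noteq> r" using nab True k by auto
        thus ?thesis using True k Ecc r1 cw by (auto simp: EE_simp)
      next
        case False
        then obtain j where j: "j \<in> {1..r}" "c1 = c j" using c1 by auto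
        show ?thesis
        proof (cases "c2 = w")
          case True
          have "j \<noteq> r" using nab True j by (auto simp: doubleton_eq_iff)
          thus ?thesis using True j Ecc r1 cw by (auto simp: EE_simp)
        next
          case F2: False
          then obtain k where k: "k \<in> {1..r}" "c2 = c k" using c2 by auto
          have "j \<noteq> k" using ne j k by auto
          thus ?thesis using j k Ecc cw by (auto simp: EE_simp)
        qed
      qed
    qed
    show "\<forall>y. y \<noteq> c r \<longrightarrow> y \<noteq> w \<longrightarrow> (?E (c r) y \<longleftrightarrow> ?E w y)"
      using crw by (auto simp: EE_simp)
    show "s r \<in> ?S" using r1 by auto
    show "\<not> ?E (s r) (c r)" "\<not> ?E (s r) w" using Esc r1 sw cw sc by (auto simp: EE_simp)
    show "\<forall>x\<in>?C - {c r, w}. ?E (s r) x" using Esc r1 sw cw by (auto simp: EE_simp)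
    show "\<forall>\<sigma>\<in>?S - {s r}. ?E \<sigma> (c r) \<and> ?E \<sigma> w"
    proof
      fix \<sigma> assume "\<sigma> \<in> ?S - {s r}"
      then obtain i where i: "i \<in> {1..r}" "\<sigma> = s i" "i \<noteq> r" using r1 by (metis DiffE imageE insertI1)
      have "E (s i) (c r)" "s i \<noteq> w" "c r \<noteq> w" using Esc[OF i(1) r1(1)] i sw cw r1 by auto
      thus "?E \<sigma> (c r) \<and> ?E \<sigma> w" using i by (auto simp: EE_simp)
    qed
    show "\<forall>\<sigma>\<in>?S - {s r}. \<forall>c1\<in>?C. \<forall>c2\<in>?C. c1 \<noteq> c2 \<longrightarrow> ?E \<sigma> c1 \<or> ?E \<sigma> c2"
    proof (intro ballI impI)
      fix \<sigma> c1 c2 assume \<sigma>: "\<sigma> \<in> ?S - {s r}" and c1: "c1 \<in> ?C" and c2: "c2 \<in> ?C" and ne: "c1 \<noteq> c2"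
      obtain i where i: "i \<in> {1..r}" "\<sigma> = s i" "i \<noteq> r" using \<sigma> r1 by (metis DiffE imageE insertI1)
      have adj: "?E \<sigma> x" if x: "x \<in> ?C" "x \<noteq> c i" for x
      proof (cases "x = w")
        case True thus ?thesis using i Esc r1 sw by (auto simp: EE_simp)
      next
        case False
        then obtain j where "j \<in> {1..r}" "x = c j" using x by auto
        thus ?thesis using i x Esc sw cw by (auto simp: EE_simp)
      qed
      show "?E \<sigma> c1 \<or> ?E \<sigma> c2"
      proof (cases "c1 = c i")
        case True
        hence "c2 \<noteq> c i" using ne by simp
        thus ?thesis using adj[OF c2] by simp
      next
        case False
        thus ?thesis using adj[OF c1] by simp
      qed
    qed
    show "\<forall>x\<in>?C - {c r, w}. \<forall>\<sigma>1\<in>?S - {s r}. \<forall>\<sigma>2\<in>?S - {s r}. \<sigma>1 \<noteq> \<sigma>2 \<longrightarrow> ?E \<sigma>1 x \<or> ?E \<sigma>2 x"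
    proof (intro ballI impI)
      fix x \<sigma>1 \<sigma>2 assume x: "x \<in> ?C - {c r, w}" and s1: "\<sigma>1 \<in> ?S - {s r}" and s2: "\<sigma>2 \<in> ?S - {s r}"
        and ne: "\<sigma>1 \<noteq> \<sigma>2"
      obtain j where j: "j \<in> {1..r}" "x = c j" using x by auto
      obtain i1 i2 where i: "i1 \<in> {1..r}" "i2 \<in> {1..r}" "\<sigma>1 = s i1" "\<sigma>2 = s i2" using s1 s2 by auto
      have "i1 \<noteq> i2" using ne i by auto
      hence "i1 \<noteq> j \<or> i2 \<noteq> j" by auto
      thus "?E \<sigma>1 x \<or> ?E \<sigma>2 x" using i j Esc sw cw by (auto simp: EE_simp)
    qed
    show "3 \<le> card ?S" using cardS r3 by simp
    show "is_dns (insert w V) ?E D" by (rule d)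
  qed
  moreover have "induced ?E H = induced E H"
    using hw by (auto simp: induced_def EE_simp fun_eq_iff)
  ultimately show "length D \<le> gamma_dns H (induced E H) + r + 2" using cardS by simp
qed

end

lemma lift_T:
  assumes sg: "simple_graph V E" and HV: "H \<subseteq> V"
    and sg': "simple_graph V' E'" and HV': "H \<subseteq> V'"
    and EH: "\<forall>x\<in>H. \<forall>y\<in>H. E' x y \<longleftrightarrow> E x y"
    and T: "is_dns H (induced E H) T"
  shows "is_dns V' E' T"
proof -
  have sgH: "simple_graph H (induced E H)" using induced_sg[OF sg HV] .
  have T': "distinct T" "set T \<subseteq> H"
    "\<forall>i<length T. \<exists>u\<in>cnbr H (induced E H) (T ! i). card (set (take i T) \<inter> cnbr H (induced E H) u) \<le> 1"
    using T dns_iff[OF sgH] by auto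
  have cn: "cnbr V' E' x \<inter> H = cnbr H (induced E H) x" if "x \<in> H" for x
    using that EH HV' by (auto simp: cnbr_def induced_def)
  show ?thesis unfolding dns_iff[OF sg']
  proof (intro conjI allI impI)
    show "distinct T" using T' by simp
    show "set T \<subseteq> V'" using T' HV' by auto
    fix i assume i: "i < length T"
    obtain u where u: "u \<in> cnbr H (induced E H) (T ! i)" "card (set (take i T) \<inter> cnbr H (induced E H) u) \<le> 1"
      using T'(3) i by blast
    have TiH: "T ! i \<in> H" using T'(2) i by auto
    have uH: "u \<in> H" using u(1) by (simp add: cnbr_def)
    have "u \<in> cnbr V' E' (T ! i)" using u(1) cn[OF TiH] by auto
    moreover have "set (take i T) \<inter> cnbr V' E' u = set (take i T) \<inter> cnbr H (induced E H) u"
      using cn[OF uH] T'(2) set_take_subset[of i T] by blast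
    ultimately show "\<exists>u\<in>cnbr V' E' (T ! i). card (set (take i T) \<inter> cnbr V' E' u) \<le> 1"
      using u(2) by (intro bexI[of _ u]) simp_all
  qed
qed

lemma append_indep:
  assumes sg: "simple_graph V E" and d: "is_dns V E xs"
    and ys: "distinct ys" "set ys \<subseteq> V" "set ys \<inter> set xs = {}"
    and na: "\<forall>y\<in>set ys. \<forall>z\<in>set xs \<union> set ys. \<not> E y z"
  shows "is_dns V E (xs @ ys)"
  using ys na
proof (induction ys rule: rev_induct)
  case Nil
  then show ?case using d by simp
next
  case (snoc y ys)
  have IH: "is_dns V E (xs @ ys)" using snoc by auto
  have yn: "y \<notin> set (xs @ ys)" using snoc.prems by auto
  have yV: "y \<in> V" using snoc.prems by auto
  have "set (xs @ ys) \<inter> cnbr V E y = {}"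
  proof (rule ccontr)
    assume "set (xs @ ys) \<inter> cnbr V E y \<noteq> {}"
    then obtain z where z0: "z \<in> set (xs @ ys)" "z \<in> cnbr V E y" by blast
    hence z: "z \<in> set (xs @ ys)" "z = y \<or> E y z" by (auto simp: cnbr_iff)
    hence "E y z" using yn by auto
    thus False using snoc.prems(4) z by auto
  qed
  hence "\<exists>u\<in>cnbr V E y. card (set (xs @ ys) \<inter> cnbr V E u) \<le> 1"
    using yV by (intro bexI[of _ y]) (auto simp: cnbr_iff)
  thus ?case using dns_snoc[OF sg, of "xs @ ys" y] IH yn yV by simp
qed

lemma append_one:
  assumes sg: "simple_graph V E" and d: "is_dns V E xs" and x: "x \<notin> set xs" "x \<in> V"
    and u: "u \<in> cnbr V E x" and sub: "set xs \<inter> cnbr V E u \<subseteq> {u0}"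
  shows "is_dns V E (xs @ [x])"
proof -
  have "card (set xs \<inter> cnbr V E u) \<le> card {u0}" by (rule card_mono[OF _ sub]) simp
  thus ?thesis using dns_snoc[OF sg] d x u by fastforce
qed

lemma notin_snoc: "x \<notin> set xs \<Longrightarrow> x \<noteq> y \<Longrightarrow> x \<notin> set (xs @ [y])" by simp

context spider_ctx
begin

lemma setS: "set (map s [1..<r+1]) = s ` {1..r}" by auto
lemma distS: "distinct (map s [1..<r+1])"
proof -
  have "set [1..<r+1] = {1..r}" by auto
  thus ?thesis using injs by (simp add: distinct_map)
qed
lemma lenS: "length (map s [1..<r+1]) = r" by simp

lemma prefix_dns:
  assumes sg': "simple_graph V' E'" and VV: "V \<subseteq> V'"
    and EH: "\<forall>x\<in>H. \<forall>y\<in>H. E' x y \<longleftrightarrow> E x y"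
    and T: "is_dns H (induced E H) T"
    and ns: "\<forall>i\<in>{1..r}. \<forall>z\<in>H \<union> s ` {1..r}. \<not> E' (s i) z"
  shows "is_dns V' E' (T @ map s [1..<r+1])"
proof -
  have TH: "set T \<subseteq> H" using T by (simp add: is_dns_def)
  have d1: "is_dns V' E' T" by (rule lift_T[OF sg HV sg' _ EH T]) (use HV VV in auto)
  show ?thesis
  proof (rule append_indep[OF sg' d1 distS])
    show "set (map s [1..<r + 1]) \<subseteq> V'" using sV VV by auto
    show "set (map s [1..<r + 1]) \<inter> set T = {}" unfolding setS using TH disj2 by blast
    show "\<forall>y\<in>set (map s [1..<r + 1]). \<forall>z\<in>set T \<union> set (map s [1..<r + 1]). \<not> E' y z"
      using ns TH by auto
  qed
qed

lemma lower_L0: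
  assumes sg': "simple_graph V' E'" and VV: "V \<subseteq> V'"
    and EH: "\<forall>x\<in>H. \<forall>y\<in>H. E' x y \<longleftrightarrow> E x y"
    and T: "is_dns H (induced E H) T"
    and ns: "\<forall>i\<in>{1..r}. \<forall>z\<in>H \<union> s ` {1..r}. \<not> E' (s i) z"
    and e12: "E' (c 1) (s 2)" "E' (c 2) (s 1)"
    and nb2: "\<forall>z\<in>H \<union> s ` {1..r}. z \<in> cnbr V' E' (s 2) \<longrightarrow> z = s 2"
    and nb1: "\<forall>z\<in>H \<union> s ` {1..r} \<union> {c 1}. z \<in> cnbr V' E' (s 1) \<longrightarrow> z = s 1"
  shows "is_dns V' E' (T @ map s [1..<r+1] @ [c 1, c 2])"
proof -
  have TH: "set T \<subseteq> H" using T by (simp add: is_dns_def)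
  have d2: "is_dns V' E' (T @ map s [1..<r+1])" by (rule prefix_dns[OF sg' VV EH T ns])
  have c12: "c 1 \<in> V'" "c 2 \<in> V'" "s 1 \<in> V'" "s 2 \<in> V'" using cV sV r1 VV by auto
  have sub: "set (T @ map s [1..<r+1]) \<subseteq> H \<union> s ` {1..r}" using TH by auto
  have "c 1 \<in> c ` {1..r}" "c 2 \<in> c ` {1..r}" using r1 by auto
  hence "c 1 \<notin> H \<union> s ` {1..r}" "c 2 \<notin> H \<union> s ` {1..r}" using disj1 disj3 by blast+
  hence cn: "c 1 \<notin> set (T @ map s [1..<r+1])" "c 2 \<notin> set (T @ map s [1..<r+1])"
    using sub by blast+
  have d3: "is_dns V' E' ((T @ map s [1..<r+1]) @ [c 1])"
  proof (rule append_one[OF sg' d2 cn(1) c12(1), of "s 2" "s 2"])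
    show "s 2 \<in> cnbr V' E' (c 1)" using e12 c12 by (simp add: cnbr_iff)
    show "set (T @ map s [1..<r + 1]) \<inter> cnbr V' E' (s 2) \<subseteq> {s 2}" using nb2 TH by auto
  qed
  have c21: "c 2 \<noteq> c 1" using c_eq r1 by simp
  have d4: "is_dns V' E' (((T @ map s [1..<r+1]) @ [c 1]) @ [c 2])"
  proof (rule append_one[OF sg' d3 _ c12(2), of "s 1" "s 1"])
    show "c 2 \<notin> set ((T @ map s [1..<r + 1]) @ [c 1])" by (rule notin_snoc[OF cn(2) c21])
    show "s 1 \<in> cnbr V' E' (c 2)" using e12 c12 by (simp add: cnbr_iff)
    show "set ((T @ map s [1..<r + 1]) @ [c 1]) \<inter> cnbr V' E' (s 1) \<subseteq> {s 1}" using nb1 TH by auto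
  qed
  thus ?thesis by simp
qed

lemma lower_L1:
  assumes sg': "simple_graph V' E'" and VV: "insert w V \<subseteq> V'"
    and EH: "\<forall>x\<in>H. \<forall>y\<in>H. E' x y \<longleftrightarrow> E x y"
    and T: "is_dns H (induced E H) T"
    and ns: "\<forall>i\<in>{1..r}. \<forall>z\<in>H \<union> s ` {1..r}. \<not> E' (s i) z"
    and nw: "\<forall>z\<in>H \<union> s ` {1..r}. z \<in> cnbr V' E' w \<longrightarrow> z = s r"
    and e12: "E' (c 1) (s 2)" "E' (c 2) (s 1)"
    and nb2: "\<forall>z\<in>H \<union> s ` {1..r} \<union> {w}. z \<in> cnbr V' E' (s 2) \<longrightarrow> z = s 2"
    and nb1: "\<forall>z\<in>H \<union> s ` {1..r} \<union> {w, c 1}. z \<in> cnbr V' E' (s 1) \<longrightarrow> z = s 1"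
  shows "is_dns V' E' (T @ map s [1..<r+1] @ [w, c 1, c 2])"
proof -
  have TH: "set T \<subseteq> H" using T by (simp add: is_dns_def)
  have d2: "is_dns V' E' (T @ map s [1..<r+1])" by (rule prefix_dns[OF sg' _ EH T ns]) (use VV in auto)
  have c12: "c 1 \<in> V'" "c 2 \<in> V'" "s 1 \<in> V'" "s 2 \<in> V'" "w \<in> V'" using cV sV r1 VV by auto
  have wn: "w \<notin> set (T @ map s [1..<r+1])"
  proof
    assume "w \<in> set (T @ map s [1..<r+1])"
    hence "w \<in> H \<or> w \<in> s ` {1..r}" using TH by auto
    thus False using HV sV w_new by blast
  qed
  have sub: "set (T @ map s [1..<r+1]) \<subseteq> H \<union> s ` {1..r}" using TH by auto
  have "c 1 \<in> c ` {1..r}" "c 2 \<in> c ` {1..r}" using r1 by auto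
  hence "c 1 \<notin> H \<union> s ` {1..r}" "c 2 \<notin> H \<union> s ` {1..r}" using disj1 disj3 by blast+
  hence cn: "c 1 \<notin> set (T @ map s [1..<r+1])" "c 2 \<notin> set (T @ map s [1..<r+1])"
    using sub by blast+
  have d3: "is_dns V' E' ((T @ map s [1..<r+1]) @ [w])"
  proof (rule append_one[OF sg' d2 wn c12(5), of w "s r"])
    show "w \<in> cnbr V' E' w" using c12 by (simp add: cnbr_iff)
    show "set (T @ map s [1..<r + 1]) \<inter> cnbr V' E' w \<subseteq> {s r}" using nw TH by auto
  qed
  have d4: "is_dns V' E' (((T @ map s [1..<r+1]) @ [w]) @ [c 1])"
  proof (rule append_one[OF sg' d3 _ c12(1), of "s 2" "s 2"])
    show "c 1 \<notin> set ((T @ map s [1..<r + 1]) @ [w])" by (rule notin_snoc[OF cn(1) cw[OF r1(2)]])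
    show "s 2 \<in> cnbr V' E' (c 1)" using e12 c12 by (simp add: cnbr_iff)
    show "set ((T @ map s [1..<r + 1]) @ [w]) \<inter> cnbr V' E' (s 2) \<subseteq> {s 2}" using nb2 TH by auto
  qed
  have c21: "c 2 \<noteq> c 1" using c_eq r1 by simp
  have d5: "is_dns V' E' ((((T @ map s [1..<r+1]) @ [w]) @ [c 1]) @ [c 2])"
  proof (rule append_one[OF sg' d4 _ c12(2), of "s 1" "s 1"])
    show "c 2 \<notin> set (((T @ map s [1..<r + 1]) @ [w]) @ [c 1])"
      by (rule notin_snoc[OF notin_snoc[OF cn(2) cw[OF r1(3)]] c21])
    show "s 1 \<in> cnbr V' E' (c 2)" using e12 c12 by (simp add: cnbr_iff)
    show "set (((T @ map s [1..<r + 1]) @ [w]) @ [c 1]) \<inter> cnbr V' E' (s 1) \<subseteq> {s 1}" using nb1 TH by auto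
  qed
  thus ?thesis by simp
qed

end

context spider_ctx
begin

lemma EE_H: "\<forall>x\<in>H. \<forall>y\<in>H. EE tr v x y \<longleftrightarrow> E x y" if "v \<notin> H"
  using hw that by (auto simp: EE_simp)

lemma low_G:
  assumes T: "is_dns H (induced E H) T"
  shows "is_dns V E (T @ map s [1..<r+1] @ [c 1, c 2])"
proof (rule lower_L0[OF sg _ _ T])
  show "\<forall>i\<in>{1..r}. \<forall>z\<in>H \<union> s ` {1..r}. \<not> E (s i) z" using Esh Ess by blast
  show "E (c 1) (s 2)" "E (c 2) (s 1)" using Ecs r1 by auto
  show "\<forall>z\<in>H \<union> s ` {1..r}. z \<in> cnbr V E (s 2) \<longrightarrow> z = s 2"
    using Esh Ess r1 by (auto simp: cnbr_iff)
  show "\<forall>z\<in>H \<union> s ` {1..r} \<union> {c 1}. z \<in> cnbr V E (s 1) \<longrightarrow> z = s 1"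
    using Esh Ess Esc r1 by (auto simp: cnbr_iff)
qed auto

lemma low_C:
  assumes T: "is_dns H (induced E H) T"
  shows "is_dns (insert w V) (EE tr (c r)) (T @ map s [1..<r+1] @ [c 1, c 2])"
proof (rule lower_L0[OF EE_sg[OF cV[OF r1(1)]] _ EE_H T])
  show "c r \<notin> H" using ch r1 by blast
  show "\<forall>i\<in>{1..r}. \<forall>z\<in>H \<union> s ` {1..r}. \<not> EE tr (c r) (s i) z"
  proof (intro ballI)
    fix i z assume i: "i \<in> {1..r}" and z: "z \<in> H \<union> s ` {1..r}"
    have "\<not> E (s i) z" using z i Esh Ess by blast
    moreover have "z \<noteq> w" using z HV sV w_new by blast
    moreover have "s i \<noteq> w" "s i \<noteq> c r" using i sw sc r1 by auto
    ultimately show "\<not> EE tr (c r) (s i) z" by (auto simp: EE_simp)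
  qed
  show "EE tr (c r) (c 1) (s 2)" "EE tr (c r) (c 2) (s 1)" using Ecs r1 cw sw by (auto simp: EE_simp)
  show "\<forall>z\<in>H \<union> s ` {1..r}. z \<in> cnbr (insert w V) (EE tr (c r)) (s 2) \<longrightarrow> z = s 2"
  proof (intro ballI impI)
    fix z assume z: "z \<in> H \<union> s ` {1..r}" and zc: "z \<in> cnbr (insert w V) (EE tr (c r)) (s 2)"
    have "\<not> E (s 2) z" using z r1 Esh Ess by blast
    moreover have "z \<noteq> w" using z HV sV w_new by blast
    moreover have "s 2 \<noteq> w" "s 2 \<noteq> c r" using sw sc r1 by auto
    ultimately show "z = s 2" using zc by (auto simp: cnbr_iff EE_simp)
  qed
  show "\<forall>z\<in>H \<union> s ` {1..r} \<union> {c 1}. z \<in> cnbr (insert w V) (EE tr (c r)) (s 1) \<longrightarrow> z = s 1"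
  proof (intro ballI impI)
    fix z assume z: "z \<in> H \<union> s ` {1..r} \<union> {c 1}" and zc: "z \<in> cnbr (insert w V) (EE tr (c r)) (s 1)"
    have "\<not> E (s 1) z" using z r1 Esh Ess Esc by blast
    moreover have "z \<noteq> w" using z HV sV cV w_new r1 by blast
    moreover have "s 1 \<noteq> w" "s 1 \<noteq> c r" using sw sc r1 by auto
    ultimately show "z = s 1" using zc by (auto simp: cnbr_iff EE_simp)
  qed
qed auto

lemma low_S:
  assumes T: "is_dns H (induced E H) T"
  shows "is_dns (insert w V) (EE tr (s r)) (T @ map s [1..<r+1] @ [w, c 1, c 2])"
proof (rule lower_L1[OF EE_sg[OF sV[OF r1(1)]] _ EE_H T])
  show "s r \<notin> H" using sh r1 by blast
  show "\<forall>i\<in>{1..r}. \<forall>z\<in>H \<union> s ` {1..r}. \<not> EE tr (s r) (s i) z"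
  proof (intro ballI)
    fix i z assume i: "i \<in> {1..r}" and z: "z \<in> H \<union> s ` {1..r}"
    have "\<not> E (s i) z" using z i Esh Ess by blast
    moreover have "z \<noteq> w" using z HV sV w_new by blast
    moreover have "s i \<noteq> w" using i sw r1 by auto
    ultimately show "\<not> EE tr (s r) (s i) z" by (auto simp: EE_simp)
  qed
  show "\<forall>z\<in>H \<union> s ` {1..r}. z \<in> cnbr (insert w V) (EE tr (s r)) w \<longrightarrow> z = s r"
  proof (intro ballI impI)
    fix z assume z: "z \<in> H \<union> s ` {1..r}" and zc: "z \<in> cnbr (insert w V) (EE tr (s r)) w"
    have "\<not> E (s r) z" using z r1 Esh Ess by blast
    moreover have "z \<noteq> w" using z HV sV w_new by blast
    ultimately show "z = s r" using zc by (auto simp: cnbr_iff EE_simp)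
  qed
  show "EE tr (s r) (c 1) (s 2)" "EE tr (s r) (c 2) (s 1)" using Ecs r1 cw sw by (auto simp: EE_simp)
  have s2r: "s 2 \<noteq> s r" "s 1 \<noteq> s r" using s_eq r1 r3 by auto
  show "\<forall>z\<in>H \<union> s ` {1..r} \<union> {w}. z \<in> cnbr (insert w V) (EE tr (s r)) (s 2) \<longrightarrow> z = s 2"
  proof (intro ballI impI)
    fix z assume z: "z \<in> H \<union> s ` {1..r} \<union> {w}" and zc: "z \<in> cnbr (insert w V) (EE tr (s r)) (s 2)"
    have "z \<noteq> w \<Longrightarrow> \<not> E (s 2) z" using z r1 Esh Ess by blast
    moreover have "\<not> E (s 2) (s r)" using Ess r1 by blast
    moreover have "s 2 \<noteq> w" using sw r1 by auto
    ultimately show "z = s 2" using zc s2r by (auto simp: cnbr_iff EE_simp)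
  qed
  show "\<forall>z\<in>H \<union> s ` {1..r} \<union> {w, c 1}. z \<in> cnbr (insert w V) (EE tr (s r)) (s 1) \<longrightarrow> z = s 1"
  proof (intro ballI impI)
    fix z assume z: "z \<in> H \<union> s ` {1..r} \<union> {w, c 1}" and zc: "z \<in> cnbr (insert w V) (EE tr (s r)) (s 1)"
    have "z \<noteq> w \<Longrightarrow> \<not> E (s 1) z" using z r1 Esh Ess Esc by blast
    moreover have "\<not> E (s 1) (s r)" using Ess r1 by blast
    moreover have "s 1 \<noteq> w" using sw r1 by auto
    ultimately show "z = s 1" using zc s2r by (auto simp: cnbr_iff EE_simp)
  qed
qed auto

end

theorem proposition10:
  fixes V :: "'a set" and E :: "'a \<Rightarrow> 'a \<Rightarrow> bool" and r :: nat
    and s c :: "nat \<Rightarrow> 'a" and H :: "'a set" and T :: "'a list" and w :: 'a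
  assumes spider: "thick_spider V E r s c H"
    and r3: "r \<ge> 3"
    and TH: "is_mdns H (induced E H) T"
    and w_new: "w \<notin> V"
  shows
   "gamma_dns (insert w V) (false_twin_edges E (s r) w)
      = gamma_dns (insert w V) (true_twin_edges E (s r) w)
    \<and> gamma_dns (insert w V) (true_twin_edges E (s r) w) = gamma_dns V E + 1
    \<and> gamma_dns V E + 1 = r + 3 + gamma_dns H (induced E H)
    \<and> is_mdns (insert w V) (false_twin_edges E (s r) w) (T @ map s [1..<r+1] @ [w, c 1, c 2])
    \<and> is_mdns (insert w V) (true_twin_edges E (s r) w) (T @ map s [1..<r+1] @ [w, c 1, c 2])
    \<and> gamma_dns (insert w V) (false_twin_edges E (c r) w)
      = gamma_dns (insert w V) (true_twin_edges E (c r) w)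
    \<and> gamma_dns (insert w V) (true_twin_edges E (c r) w) = gamma_dns V E
    \<and> gamma_dns V E = r + 2 + gamma_dns H (induced E H)
    \<and> is_mdns (insert w V) (false_twin_edges E (c r) w) (T @ map s [1..<r+1] @ [c 1, c 2])
    \<and> is_mdns (insert w V) (true_twin_edges E (c r) w) (T @ map s [1..<r+1] @ [c 1, c 2])"
proof -
  interpret X: spider_ctx V E r s c H w using spider r3 w_new by unfold_locales
  have Td: "is_dns H (induced E H) T" and Tl: "length T = gamma_dns H (induced E H)"
    using TH by (auto simp: is_mdns_def)
  let ?g = "gamma_dns H (induced E H)"
  let ?L0 = "T @ map s [1..<r+1] @ [c 1, c 2]"
  let ?L1 = "T @ map s [1..<r+1] @ [w, c 1, c 2]"
  have l0: "length ?L0 = ?g + r + 2" using Tl by simp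
  have l1: "length ?L1 = ?g + r + 3" using Tl by simp
  have EEf: "X.EE False v = false_twin_edges E v w" for v by (simp add: X.EE_def)
  have EEt: "X.EE True v = true_twin_edges E v w" for v by (simp add: X.EE_def)
  have gG: "gamma_dns V E = ?g + r + 2"
    using X.upper_G dns_le_gamma[OF X.sg X.low_G[OF Td]] l0 by simp
  have gS: "gamma_dns (insert w V) (X.EE tr (s r)) = ?g + r + 3" for tr
    using X.upper_S[of tr] dns_le_gamma[OF X.EE_sg[OF X.sV[OF X.r1(1)]] X.low_S[OF Td, of tr]] l1 by simp
  have gC: "gamma_dns (insert w V) (X.EE tr (c r)) = ?g + r + 2" for tr
    using X.upper_C[of tr] dns_le_gamma[OF X.EE_sg[OF X.cV[OF X.r1(1)]] X.low_C[OF Td, of tr]] l0 by simp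
  have dS: "is_mdns (insert w V) (X.EE tr (s r)) ?L1" for tr
    using X.low_S[OF Td, of tr] gS[of tr] l1 by (simp add: is_mdns_def)
  have dC: "is_mdns (insert w V) (X.EE tr (c r)) ?L0" for tr
    using X.low_C[OF Td, of tr] gC[of tr] l0 by (simp add: is_mdns_def)
  show ?thesis
    using gG gS[of False] gS[of True] gC[of False] gC[of True] dS[of False] dS[of True]
      dC[of False] dC[of True]
    unfolding EEf EEt by simp
qed

end
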